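(* Let $m$ be a positive integer, let $S=\mathbb{Q}[t^{\pm1}]/((t^2-3t+1)^m)$ viewed as an abelian group, and let $\Gamma_1=S\rtimes\langle\mu\rangle$, where $\mu$ generates an infinite cyclic group acting on $S$ by multiplication by $t$ (i.e.\ $\mu^{-1}s\mu=st$). Let $\mathcal{R}_1=(\mathbb{Q}\Gamma_1)(\mathbb{Q}[\Gamma_1,\Gamma_1]\setminus\{0\})^{-1}$ be the Ore localization. Then the ring $\mathcal{R}_1$ is simple, i.e.\ it has no two-sided ideals other than $0$ and $\mathcal{R}_1$.
   Context: $\mathcal{R}_1$ is isomorphic to the skew Laurent polynomial ring $\mathbb{K}_1[\mu^{\pm1}]$, where $\mathbb{K}_1$ is the (commutative) quotient field of $\mathbb{Z}[S]$, with $a\mu=\mu\alpha(a)$ for the automorphism $\alpha$ of $\mathbb{K}_1$ induced by multiplication by $t$ on $S$. *)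

theory Defs
  imports "HOL-Computational_Algebra.Polynomial" "HOL-Algebra.Generated_Groups" "HOL-Algebra.Ideal"
begin

text \<open>Since t^2-3t+1 has constant term 1, t is a unit modulo (t^2-3t+1)^m, hence
  Q[t^{+-1}]/((t^2-3t+1)^m) = Q[t]/((t^2-3t+1)^m).  We represent residue classes by their
  reduced representatives (polynomials of degree < 2m).\<close>

definition qpoly :: "nat \<Rightarrow> rat poly" where
  "qpoly m = [:1, -3, 1:] ^ m"

text \<open>An inverse of t modulo qpoly m: qpoly m - 1 = t * r, so t * (-r) = 1 - qpoly m.\<close>
definition tinv :: "nat \<Rightarrow> rat poly" where
  "tinv m = - ((qpoly m - 1) div [:0, 1:])"

definition tpow :: "nat \<Rightarrow> int \<Rightarrow> rat poly \<Rightarrow> rat poly" where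
  "tpow m k s = (s * (if 0 \<le> k then [:0, 1:] ^ nat k else tinv m ^ nat (- k))) mod qpoly m"

definition S_car :: "nat \<Rightarrow> rat poly set" where
  "S_car m = {s. s mod qpoly m = s}"

text \<open>The pair (s, n) stands for the element s * mu^n.  Then mu^n s = (s t^{-n}) mu^n, so
  (s1 mu^n1)(s2 mu^n2) = (s1 + s2 t^{-n1}) mu^(n1+n2).\<close>
definition Gamma1 :: "nat \<Rightarrow> (rat poly \<times> int) monoid" where
  "Gamma1 m = \<lparr> carrier = S_car m \<times> UNIV,
      mult = (\<lambda>(s1, n1) (s2, n2). (s1 + tpow m (- n1) s2, n1 + n2)),
      one = (0, 0) \<rparr>"

definition supp :: "('g \<Rightarrow> rat) \<Rightarrow> 'g set" where
  "supp f = {x. f x \<noteq> 0}"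

definition group_ring :: "('g, 'm) monoid_scheme \<Rightarrow> ('g \<Rightarrow> rat) ring" where
  "group_ring G = \<lparr> carrier = {f. finite (supp f) \<and> supp f \<subseteq> carrier G},
      mult = (\<lambda>f g x. \<Sum>(y, z) \<in> {(y, z). y \<in> supp f \<and> z \<in> supp g \<and> y \<otimes>\<^bsub>G\<^esub> z = x}. f y * g z),
      one = (\<lambda>x. if x = \<one>\<^bsub>G\<^esub> then 1 else 0),
      zero = (\<lambda>x. 0),
      add = (\<lambda>f g x. f x + g x) \<rparr>"

definition sub_group_ring :: "('g, 'm) monoid_scheme \<Rightarrow> 'g set \<Rightarrow> ('g \<Rightarrow> rat) set" where
  "sub_group_ring G H = {f \<in> carrier (group_ring G). supp f \<subseteq> H}"

text \<open>(R, phi) is a right ring of fractions of A with respect to T (Lam, Lectures on Modules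
  and Rings, Def. 10.1): phi(T) consists of units, every element of R has the form
  phi(a) phi(t)^{-1}, and ker phi = {a. a t = 0 for some t in T}.\<close>
definition right_ring_of_fractions ::
    "('a, 'c) ring_scheme \<Rightarrow> 'a set \<Rightarrow> ('b, 'd) ring_scheme \<Rightarrow> ('a \<Rightarrow> 'b) \<Rightarrow> bool" where
  "right_ring_of_fractions A T R \<phi> \<longleftrightarrow>
     ring R \<and> \<phi> \<in> ring_hom A R \<and>
     (\<forall>t\<in>T. \<phi> t \<in> Units R) \<and>
     (\<forall>r\<in>carrier R. \<exists>a\<in>carrier A. \<exists>t\<in>T. r = \<phi> a \<otimes>\<^bsub>R\<^esub> inv\<^bsub>R\<^esub> (\<phi> t)) \<and>
     (\<forall>a\<in>carrier A. \<phi> a = \<zero>\<^bsub>R\<^esub> \<longleftrightarrow> (\<exists>t\<in>T. a \<otimes>\<^bsub>A\<^esub> t = \<zero>\<^bsub>A\<^esub>))"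

definition simple_ring :: "('b, 'd) ring_scheme \<Rightarrow> bool" where
  "simple_ring R \<longleftrightarrow> ring R \<and> \<zero>\<^bsub>R\<^esub> \<noteq> \<one>\<^bsub>R\<^esub> \<and>
     (\<forall>I. ideal I R \<longrightarrow> I = {\<zero>\<^bsub>R\<^esub>} \<or> I = carrier R)"

definition QGamma1 :: "nat \<Rightarrow> (rat poly \<times> int \<Rightarrow> rat) ring" where
  "QGamma1 m = group_ring (Gamma1 m)"

definition T1 :: "nat \<Rightarrow> (rat poly \<times> int \<Rightarrow> rat) set" where
  "T1 m = sub_group_ring (Gamma1 m) (derived (Gamma1 m) (carrier (Gamma1 m))) - {\<lambda>x. 0}"

end

theory Submission
  imports Defs "HOL-Library.Poly_Mapping" "HOL-Computational_Algebra.Fraction_Field"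
    "HOL-Library.Function_Algebras" "HOL-Algebra.Weak_Morphisms"
begin
definition Ek :: "nat \<Rightarrow> int \<Rightarrow> rat poly" where
  "Ek m k = (if 0 \<le> k then [:0, 1:] ^ nat k else tinv m ^ nat (- k))"

lemma tpow_Ek: "tpow m k s = (s * Ek m k) mod qpoly m"
  by (simp add: tpow_def Ek_def)

lemma qpoly_nz: "qpoly m \<noteq> 0"
  by (simp add: qpoly_def)

lemma degree_qpoly: "degree (qpoly m) = 2 * m"
  by (simp add: qpoly_def degree_power_eq)

lemma X_tinv: "[:0, 1:] * tinv m = 1 - qpoly m"
proof -
  have "poly (qpoly m - 1) 0 = 0" by (simp add: qpoly_def poly_power)
  then have "[:-0, 1:] dvd qpoly m - 1" using dvd_iff_poly_eq_0[of 0 "qpoly m - 1"] by simp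
  then have d: "[:0, 1:] dvd qpoly m - 1" by simp
  have e: "[:0,1:] * ((qpoly m - 1) div [:0,1:]) = qpoly m - 1" by (rule dvd_mult_div_cancel[OF d])
  show ?thesis unfolding tinv_def by (simp only: mult_minus_right e minus_diff_eq)
qed

lemma X_tinv_mod: "([:0, 1:] * tinv m) mod qpoly m = 1 mod qpoly m"
proof -
  have "(1 - qpoly m) mod qpoly m = 1 mod qpoly m"
    by (metis add_diff_cancel_left' diff_add_cancel mod_add_self2)
  then show ?thesis unfolding X_tinv .
qed

lemma XT_mod: "([:0,1:] ^ i * tinv m ^ j) mod qpoly m = Ek m (int i - int j) mod qpoly m"
proof (induction j arbitrary: i)
  case 0 then show ?case by (simp add: Ek_def)
next
  case (Suc j)
  show ?case
  proof (cases i)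
    case 0
    have h: "\<not> 0 \<le> int 0 - int (Suc j)" by linarith
    have h2: "nat (- (int 0 - int (Suc j))) = Suc j" by linarith
    have "Ek m (int 0 - int (Suc j)) = tinv m ^ Suc j"
      by (simp only: Ek_def h h2 if_False)
    then show ?thesis unfolding 0 by simp
  next
    case (Suc i')
    have "([:0,1:] ^ i * tinv m ^ Suc j) = ([:0, 1:] * tinv m) * ([:0,1:] ^ i' * tinv m ^ j)"
      by (simp add: Suc algebra_simps)
    then have "([:0,1:] ^ i * tinv m ^ Suc j) mod qpoly m
        = ((([:0, 1:] * tinv m) mod qpoly m) * ([:0,1:] ^ i' * tinv m ^ j)) mod qpoly m"
      by (simp add: mod_mult_left_eq)
    also have "\<dots> = ((1 mod qpoly m) * ([:0,1:] ^ i' * tinv m ^ j)) mod qpoly m"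
      by (simp only: X_tinv_mod)
    also have "\<dots> = ([:0,1:] ^ i' * tinv m ^ j) mod qpoly m"
      by (simp add: mod_mult_left_eq)
    also have "\<dots> = Ek m (int i - int (Suc j)) mod qpoly m"
      using Suc.IH[of i'] by (simp add: \<open>i = Suc i'\<close>)
    finally show ?thesis .
  qed
qed

lemma Ek_split: "Ek m k = [:0,1:] ^ nat k * tinv m ^ nat (- k)"
  by (simp add: Ek_def)

lemma Ek_mult_mod: "(Ek m a * Ek m b) mod qpoly m = Ek m (a + b) mod qpoly m"
proof -
  have "Ek m a * Ek m b = [:0,1:] ^ (nat a + nat b) * tinv m ^ (nat (-a) + nat (-b))"
    by (simp add: Ek_split power_add algebra_simps)
  also have "\<dots> mod qpoly m = Ek m (int (nat a + nat b) - int (nat (-a) + nat (-b))) mod qpoly m"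
    by (rule XT_mod)
  also have "int (nat a + nat b) - int (nat (-a) + nat (-b)) = a + b" by simp
  finally show ?thesis .
qed

lemma tpow_tpow: "tpow m a (tpow m b s) = tpow m (a + b) s"
proof -
  have "tpow m a (tpow m b s) = (s * Ek m b * Ek m a) mod qpoly m"
    by (simp add: tpow_Ek mod_mult_left_eq)
  also have "\<dots> = (s * ((Ek m b * Ek m a) mod qpoly m)) mod qpoly m"
    by (simp add: mod_mult_right_eq mult.assoc)
  also have "\<dots> = (s * (Ek m (a + b) mod qpoly m)) mod qpoly m"
    by (simp add: Ek_mult_mod add.commute)
  also have "\<dots> = tpow m (a + b) s"
    by (simp add: tpow_Ek mod_mult_right_eq)
  finally show ?thesis .
qed

lemma tpow_0: "tpow m 0 s = s mod qpoly m"
  by (simp add: tpow_Ek Ek_def)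

lemma S_car_iff: "0 < m \<Longrightarrow> s \<in> S_car m \<longleftrightarrow> degree s < degree (qpoly m)"
proof
  assume m: "0 < m" and "s \<in> S_car m"
  then have e: "s mod qpoly m = s" by (simp add: S_car_def)
  show "degree s < degree (qpoly m)"
  proof (cases "s = 0")
    case True then show ?thesis using m by (simp add: degree_qpoly)
  next
    case False
    have "s mod qpoly m \<noteq> 0" using e False by simp
    then have "degree (s mod qpoly m) < degree (qpoly m)" by (rule degree_mod_less'[OF qpoly_nz])
    then show ?thesis unfolding e .
  qed
next
  assume "degree s < degree (qpoly m)"
  then show "s \<in> S_car m" by (simp add: S_car_def mod_poly_less)
qed

lemma mod_in_S: "x mod qpoly m \<in> S_car m"
  by (simp add: S_car_def)

lemma tpow_in_S: "tpow m k s \<in> S_car m"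
  by (simp add: tpow_def S_car_def)

context
  fixes m :: nat assumes m: "0 < m"
begin

lemma S_add: "x \<in> S_car m \<Longrightarrow> y \<in> S_car m \<Longrightarrow> x + y \<in> S_car m"
proof -
  assume a: "x \<in> S_car m" "y \<in> S_car m"
  then have "degree x < degree (qpoly m)" "degree y < degree (qpoly m)" using S_car_iff[OF m] by auto
  then have "degree (x + y) < degree (qpoly m)" using degree_add_le_max[of x y] by linarith
  then show ?thesis using S_car_iff[OF m] by auto
qed

lemma S_uminus: "x \<in> S_car m \<Longrightarrow> - x \<in> S_car m"
  using S_car_iff[OF m] by simp

lemma S_diff: "x \<in> S_car m \<Longrightarrow> y \<in> S_car m \<Longrightarrow> x - y \<in> S_car m"
  using S_add[of x "-y"] S_uminus[of y] by simp

lemma S_zero: "0 \<in> S_car m"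
  by (simp add: S_car_def)

lemma S_one: "1 \<in> S_car m"
  using S_car_iff[OF m] m by (simp add: degree_qpoly)

end

lemma tpow_add: "0 < m \<Longrightarrow> tpow m k (x + y) = tpow m k x + tpow m k y"
proof -
  assume m: "0 < m"
  have "tpow m k (x + y) = ((x * Ek m k) mod qpoly m + (y * Ek m k) mod qpoly m) mod qpoly m"
    by (simp add: tpow_Ek distrib_right mod_add_eq)
  also have "\<dots> = tpow m k x + tpow m k y"
    using S_add[OF m tpow_in_S tpow_in_S, of k x k y] by (simp add: tpow_Ek S_car_def)
  finally show ?thesis .
qed

lemma tpow_uminus: "0 < m \<Longrightarrow> tpow m k (- x) = - tpow m k x"
  by (simp add: tpow_Ek mod_minus_eq)

lemma tpow_zero: "tpow m k 0 = 0"
  by (simp add: tpow_Ek)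

lemma tpow_diff: "0 < m \<Longrightarrow> tpow m k (x - y) = tpow m k x - tpow m k y"
  using tpow_add[of m k x "-y"] tpow_uminus[of m k y] by simp

lemma tpow_0_S: "s \<in> S_car m \<Longrightarrow> tpow m 0 s = s"
  by (simp add: tpow_0 S_car_def)

lemma tpow_inj: "s \<in> S_car m \<Longrightarrow> s' \<in> S_car m \<Longrightarrow> tpow m k s = tpow m k s' \<Longrightarrow> s = s'"
  by (metis add.left_inverse tpow_0_S tpow_tpow)


lemma ident: fixes X u s t Q d V c :: "'a::comm_ring_1"
  assumes "X*t = 1 - Q" "(X - 1)*V = 1 - c*Q" "u = s*X*V - d*Q"
  shows "X*(u - u*t - s) = Q*(u - d*(X-1) - s*X*c)"
proof -
  have "X*(u - u*t - s) = X*u - u*(X*t) - X*s" by (simp add: algebra_simps)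
  also have "\<dots> = u*(X - 1) + u*Q - X*s" by (subst assms(1)) (simp add: algebra_simps)
  also have "u*(X - 1) = s*X*((X - 1)*V) - d*Q*(X-1)" unfolding assms(3) by (simp add: algebra_simps)
  also have "\<dots> = s*X - s*X*c*Q - d*Q*(X-1)" by (subst assms(2)) (simp add: algebra_simps)
  finally show ?thesis by (simp add: algebra_simps)
qed

lemma Q_dvd_of_X: "qpoly m dvd [:0,1:] * z \<Longrightarrow> qpoly m dvd z"
proof -
  assume d: "qpoly m dvd [:0,1:] * z"
  obtain X :: "rat poly" where X: "X = [:0,1:]" by blast
  have Xt: "X * tinv m = 1 - qpoly m" using X_tinv[of m] X by simp
  have "z = z * (X * tinv m + qpoly m)" using Xt by simp
  also have "\<dots> = tinv m * (X * z) + qpoly m * z" by (simp add: algebra_simps)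
  also have "qpoly m dvd \<dots>"
  proof -
    have "qpoly m dvd X * z" using d X by simp
    then show ?thesis by (rule dvd_add[OF dvd_mult dvd_triv_left])
  qed
  finally show ?thesis .
qed

lemma solve_comm: "0 < m \<Longrightarrow> s \<in> S_car m \<Longrightarrow> \<exists>u\<in>S_car m. u - tpow m (-1) u = s"
proof -
  assume m: "0 < m" and s: "s \<in> S_car m"
  define q1 :: "rat poly" where "q1 = [:1, -3, 1:]"
  define w where "w = (\<Sum>i<m. (- q1) ^ i)"
  define X :: "rat poly" where "X = [:0, 1:]"
  define V where "V = [:-2, 1:] * w"
  define Q where "Q = qpoly m"
  define u where "u = (s * X * V) mod Q"
  define d where "d = (s * X * V) div Q"
  define z where "z = u - u * tinv m - s"
  have X1: "X - 1 = [:-1, 1:]" by (simp add: X_def one_pCons)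
  have XX: "[:-1, 1:] * [:-2, 1:] = 1 + q1" by (simp add: q1_def one_pCons)
  have "(X - 1) * V = ([:-1,1:] * [:-2,1:]) * w" by (simp only: X1 V_def mult.assoc)
  also have "\<dots> = (1 + q1) * w" by (simp only: XX)
  also have "\<dots> = 1 - (- q1) ^ m" using one_diff_power_eq[of "- q1" m] by (simp add: w_def)
  finally have XV: "(X - 1) * V = 1 - (- q1) ^ m" .
  have qQ: "(- q1) ^ m = (-1) ^ m * Q"
    unfolding power_minus[of q1 m] by (simp add: Q_def qpoly_def q1_def)
  have ud: "u = s * X * V - d * Q"
    by (simp add: u_def d_def minus_div_mult_eq_mod)
  have Xt: "X * tinv m = 1 - Q" using X_tinv[of m] by (simp add: X_def Q_def)
  have "X * z = Q * (u - d * (X - 1) - s * X * (-1) ^ m)"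
    unfolding z_def by (rule ident[OF Xt _ ud]) (simp add: XV qQ)
  then have "Q dvd X * z" by simp
  then have "Q dvd z" unfolding X_def Q_def by (rule Q_dvd_of_X)
  then have e1: "(u - u * tinv m) mod Q = s mod Q"
    using mod_eq_dvd_iff[of "u - u * tinv m" Q s] by (simp add: z_def)
  have uS: "u \<in> S_car m" by (simp add: u_def Q_def mod_in_S)
  have tp: "tpow m (-1) u = (u * tinv m) mod Q" by (simp add: tpow_def Q_def)
  have inS: "u - tpow m (-1) u \<in> S_car m" by (rule S_diff[OF m uS tpow_in_S])
  have "u - tpow m (-1) u = (u - tpow m (-1) u) mod Q"
    using inS by (simp add: S_car_def Q_def)
  also have "\<dots> = (u - u * tinv m) mod Q"
    by (simp add: tp mod_diff_right_eq)
  also have "\<dots> = s" using e1 s by (simp add: S_car_def Q_def)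
  finally show ?thesis using uS by blast
qed

context fixes m :: nat assumes m: "0 < m"
begin

lemma G_carrier: "carrier (Gamma1 m) = S_car m \<times> UNIV"
  by (simp add: Gamma1_def)

lemma G_mult: "(s1, n1) \<otimes>\<^bsub>Gamma1 m\<^esub> (s2, n2) = (s1 + tpow m (- n1) s2, n1 + n2)"
  by (simp add: Gamma1_def)

lemma G_one: "\<one>\<^bsub>Gamma1 m\<^esub> = (0, 0)"
  by (simp add: Gamma1_def)

lemma G_group: "group (Gamma1 m)"
proof (rule groupI)
  fix x y assume "x \<in> carrier (Gamma1 m)" "y \<in> carrier (Gamma1 m)"
  then show "x \<otimes>\<^bsub>Gamma1 m\<^esub> y \<in> carrier (Gamma1 m)"
    by (cases x, cases y) (auto simp: G_carrier G_mult intro!: S_add[OF m] tpow_in_S)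
next
  show "\<one>\<^bsub>Gamma1 m\<^esub> \<in> carrier (Gamma1 m)" by (simp add: G_one G_carrier S_zero[OF m])
next
  fix x y z assume "x \<in> carrier (Gamma1 m)" "y \<in> carrier (Gamma1 m)" "z \<in> carrier (Gamma1 m)"
  then show "x \<otimes>\<^bsub>Gamma1 m\<^esub> y \<otimes>\<^bsub>Gamma1 m\<^esub> z = x \<otimes>\<^bsub>Gamma1 m\<^esub> (y \<otimes>\<^bsub>Gamma1 m\<^esub> z)"
    by (cases x, cases y, cases z) (simp add: G_mult tpow_add[OF m] tpow_tpow add.assoc)
next
  fix x assume "x \<in> carrier (Gamma1 m)"
  then show "\<one>\<^bsub>Gamma1 m\<^esub> \<otimes>\<^bsub>Gamma1 m\<^esub> x = x"
    by (cases x) (simp add: G_one G_mult G_carrier tpow_0_S)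
next
  fix x assume "x \<in> carrier (Gamma1 m)"
  then obtain s n where x: "x = (s, n)" "s \<in> S_car m" by (cases x) (auto simp: G_carrier)
  show "\<exists>y\<in>carrier (Gamma1 m). y \<otimes>\<^bsub>Gamma1 m\<^esub> x = \<one>\<^bsub>Gamma1 m\<^esub>"
    by (rule bexI[of _ "(- tpow m n s, - n)"])
       (simp_all add: x G_mult G_one G_carrier tpow_tpow tpow_0_S S_uminus[OF m] tpow_in_S)
qed

lemma G_inv: "s \<in> S_car m \<Longrightarrow> inv\<^bsub>Gamma1 m\<^esub> (s, n) = (- tpow m n s, - n)"
  by (rule group.inv_equality[OF G_group])
     (simp_all add: G_mult G_one G_carrier tpow_tpow tpow_0_S S_uminus[OF m] tpow_in_S)

lemma S0_subgroup: "subgroup (S_car m \<times> {0}) (Gamma1 m)"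
  apply (rule group.subgroupI[OF G_group])
  using S_zero[OF m] apply (auto simp: G_carrier)[2]
  apply (auto simp: G_carrier G_mult G_inv S_uminus[OF m] S_add[OF m] tpow_in_S tpow_uminus[OF m] tpow_0_S)
  done

lemma derived_sub: "derived (Gamma1 m) (carrier (Gamma1 m)) \<subseteq> S_car m \<times> {0}"
  unfolding derived_def
proof (rule group.generate_subgroup_incl[OF G_group _ S0_subgroup])
  show "derived_set (Gamma1 m) (carrier (Gamma1 m)) \<subseteq> S_car m \<times> {0}"
  proof
    fix x assume "x \<in> derived_set (Gamma1 m) (carrier (Gamma1 m))"
    then obtain h1 h2 where h: "h1 \<in> carrier (Gamma1 m)" "h2 \<in> carrier (Gamma1 m)"
      "x = h1 \<otimes>\<^bsub>Gamma1 m\<^esub> h2 \<otimes>\<^bsub>Gamma1 m\<^esub> inv\<^bsub>Gamma1 m\<^esub> h1 \<otimes>\<^bsub>Gamma1 m\<^esub> inv\<^bsub>Gamma1 m\<^esub> h2"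
      by blast
    have xc: "x \<in> carrier (Gamma1 m)"
      using h monoid.m_closed[OF group.is_monoid[OF G_group]] group.inv_closed[OF G_group] by simp
    obtain s1 n1 s2 n2 where hh: "h1 = (s1, n1)" "h2 = (s2, n2)" by (cases h1, cases h2) auto
    have "snd x = 0" using h hh by (simp add: G_carrier G_inv G_mult)
    then show "x \<in> S_car m \<times> {0}" using xc by (cases x) (simp add: G_carrier)
  qed
qed

lemma derived_sup: "S_car m \<times> {0} \<subseteq> derived (Gamma1 m) (carrier (Gamma1 m))"
proof clarify
  fix s assume s: "s \<in> S_car m"
  obtain u where u: "u \<in> S_car m" "u - tpow m (-1) u = s" using solve_comm[OF m s] by blast
  have "(s, 0) = (u, 0) \<otimes>\<^bsub>Gamma1 m\<^esub> (0, 1) \<otimes>\<^bsub>Gamma1 m\<^esub> inv\<^bsub>Gamma1 m\<^esub> (u, 0) \<otimes>\<^bsub>Gamma1 m\<^esub> inv\<^bsub>Gamma1 m\<^esub> (0, 1)"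
    using u by (simp add: G_inv S_zero[OF m] G_mult tpow_zero tpow_0_S tpow_uminus[OF m])
  moreover have "(u, 0) \<in> carrier (Gamma1 m)" "(0, 1) \<in> carrier (Gamma1 m)"
    using u S_zero[OF m] by (auto simp: G_carrier)
  ultimately have "(s, 0) \<in> derived_set (Gamma1 m) (carrier (Gamma1 m))" by blast
  then show "(s, 0) \<in> derived (Gamma1 m) (carrier (Gamma1 m))"
    unfolding derived_def by (rule generate.incl)
qed

lemma derived_eq: "derived (Gamma1 m) (carrier (Gamma1 m)) = S_car m \<times> {0}"
  using derived_sub derived_sup by blast

end

definition delta :: "'g \<Rightarrow> 'g \<Rightarrow> rat" where
  "delta g = (\<lambda>x. if x = g then 1 else 0)"

lemma supp_delta: "supp (delta g) = {g}"
  by (auto simp: supp_def delta_def)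

lemma GR_carrier: "f \<in> carrier (group_ring G) \<longleftrightarrow> finite (supp f) \<and> supp f \<subseteq> carrier G"
  by (simp add: group_ring_def)

lemma GR_mult: "f \<otimes>\<^bsub>group_ring G\<^esub> g =
  (\<lambda>x. \<Sum>(y, z) \<in> {(y, z). y \<in> supp f \<and> z \<in> supp g \<and> y \<otimes>\<^bsub>G\<^esub> z = x}. f y * g z)"
  by (simp add: group_ring_def)

lemma GR_add: "f \<oplus>\<^bsub>group_ring G\<^esub> g = (\<lambda>x. f x + g x)"
  by (simp add: group_ring_def)

lemma GR_one: "\<one>\<^bsub>group_ring G\<^esub> = delta \<one>\<^bsub>G\<^esub>"
  by (simp add: group_ring_def delta_def)

lemma GR_zero: "\<zero>\<^bsub>group_ring G\<^esub> = (\<lambda>x. 0)"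
  by (simp add: group_ring_def)

lemma supp_zero: "supp (\<lambda>x. 0) = {}"
  by (simp add: supp_def)

lemma supp_empty_iff: "supp f = {} \<longleftrightarrow> f = (\<lambda>x. 0)"
  by (auto simp: supp_def)

lemma GR_mult_index_sub:
  "{(y, z). y \<in> supp f \<and> z \<in> supp g \<and> y \<otimes>\<^bsub>G\<^esub> z = x} \<subseteq> supp f \<times> supp g"
  by auto

lemma supp_GR_mult:
  "supp (f \<otimes>\<^bsub>group_ring G\<^esub> g) \<subseteq> (\<lambda>(y, z). y \<otimes>\<^bsub>G\<^esub> z) ` (supp f \<times> supp g)"
proof
  fix x assume x: "x \<in> supp (f \<otimes>\<^bsub>group_ring G\<^esub> g)"
  show "x \<in> (\<lambda>(y, z). y \<otimes>\<^bsub>G\<^esub> z) ` (supp f \<times> supp g)"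
  proof (rule ccontr)
    assume "x \<notin> (\<lambda>(y, z). y \<otimes>\<^bsub>G\<^esub> z) ` (supp f \<times> supp g)"
    then have e: "{(y, z). y \<in> supp f \<and> z \<in> supp g \<and> y \<otimes>\<^bsub>G\<^esub> z = x} = {}" by auto
    have "(f \<otimes>\<^bsub>group_ring G\<^esub> g) x = (\<Sum>(y, z) \<in> {(y, z). y \<in> supp f \<and> z \<in> supp g \<and> y \<otimes>\<^bsub>G\<^esub> z = x}. f y * g z)"
      by (simp add: GR_mult)
    also have "\<dots> = 0" unfolding e by simp
    finally show False using x by (simp add: supp_def)
  qed
qed

lemma GR_mult_closed:
  assumes "monoid G" "f \<in> carrier (group_ring G)" "g \<in> carrier (group_ring G)"
  shows "f \<otimes>\<^bsub>group_ring G\<^esub> g \<in> carrier (group_ring G)"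
proof -
  have fin: "finite (supp f)" "finite (supp g)" and sub: "supp f \<subseteq> carrier G" "supp g \<subseteq> carrier G"
    using assms by (auto simp: GR_carrier)
  have "(\<lambda>(y, z). y \<otimes>\<^bsub>G\<^esub> z) ` (supp f \<times> supp g) \<subseteq> carrier G"
    using sub monoid.m_closed[OF assms(1)] by auto
  moreover have "finite ((\<lambda>(y, z). y \<otimes>\<^bsub>G\<^esub> z) ` (supp f \<times> supp g))" using fin by simp
  ultimately show ?thesis using supp_GR_mult[of G f g]
    by (auto simp: GR_carrier intro: finite_subset)
qed

lemma delta_carrier: "g \<in> carrier G \<Longrightarrow> delta g \<in> carrier (group_ring G)"
  by (simp add: GR_carrier supp_delta)

lemma delta_mult_left:
  assumes G: "group G" and g: "g \<in> carrier G" and f: "f \<in> carrier (group_ring G)"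
  shows "(delta g \<otimes>\<^bsub>group_ring G\<^esub> f) x = (if x \<in> carrier G then f (inv\<^bsub>G\<^esub> g \<otimes>\<^bsub>G\<^esub> x) else 0)"
proof -
  have fs: "supp f \<subseteq> carrier G" using f by (simp add: GR_carrier)
  let ?I = "{(y, z). y \<in> supp (delta g) \<and> z \<in> supp f \<and> y \<otimes>\<^bsub>G\<^esub> z = x}"
  show ?thesis
  proof (cases "x \<in> carrier G")
    case True
    have eq: "\<And>z. z \<in> carrier G \<Longrightarrow> g \<otimes>\<^bsub>G\<^esub> z = x \<longleftrightarrow> z = inv\<^bsub>G\<^esub> g \<otimes>\<^bsub>G\<^esub> x"
      using group.inv_solve_left[OF G _ g True] by metis
    have canc: "\<And>b. b \<in> carrier G \<Longrightarrow> inv\<^bsub>G\<^esub> g \<otimes>\<^bsub>G\<^esub> (g \<otimes>\<^bsub>G\<^esub> b) = b"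
      by (metis g group.inv_solve_left[OF G] monoid.m_closed[OF group.is_monoid[OF G]])
    have "?I = (if inv\<^bsub>G\<^esub> g \<otimes>\<^bsub>G\<^esub> x \<in> supp f then {(g, inv\<^bsub>G\<^esub> g \<otimes>\<^bsub>G\<^esub> x)} else {})"
      using eq fs canc by (auto simp: supp_delta)
    then show ?thesis using True by (auto simp: GR_mult delta_def supp_def)
  next
    case False
    have e: "?I = {}"
      using False fs g monoid.m_closed[OF group.is_monoid[OF G]] by (auto simp: supp_delta)
    show ?thesis using False unfolding GR_mult by (simp only: e sum.empty if_False)
  qed
qed

lemma mult_delta_right:
  assumes G: "group G" and g: "g \<in> carrier G" and f: "f \<in> carrier (group_ring G)"
  shows "(f \<otimes>\<^bsub>group_ring G\<^esub> delta g) x = (if x \<in> carrier G then f (x \<otimes>\<^bsub>G\<^esub> inv\<^bsub>G\<^esub> g) else 0)"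
proof -
  have fs: "supp f \<subseteq> carrier G" using f by (simp add: GR_carrier)
  let ?I = "{(y, z). y \<in> supp f \<and> z \<in> supp (delta g) \<and> y \<otimes>\<^bsub>G\<^esub> z = x}"
  show ?thesis
  proof (cases "x \<in> carrier G")
    case True
    have eq: "\<And>y. y \<in> carrier G \<Longrightarrow> y \<otimes>\<^bsub>G\<^esub> g = x \<longleftrightarrow> y = x \<otimes>\<^bsub>G\<^esub> inv\<^bsub>G\<^esub> g"
      using group.inv_solve_right[OF G _ True g] by metis
    have canc: "\<And>b. b \<in> carrier G \<Longrightarrow> (b \<otimes>\<^bsub>G\<^esub> g) \<otimes>\<^bsub>G\<^esub> inv\<^bsub>G\<^esub> g = b"
      by (metis g group.inv_solve_right[OF G] monoid.m_closed[OF group.is_monoid[OF G]])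
    have "?I = (if x \<otimes>\<^bsub>G\<^esub> inv\<^bsub>G\<^esub> g \<in> supp f then {(x \<otimes>\<^bsub>G\<^esub> inv\<^bsub>G\<^esub> g, g)} else {})"
      using eq fs canc by (auto simp: supp_delta)
    then show ?thesis using True by (auto simp: GR_mult delta_def supp_def)
  next
    case False
    have e: "?I = {}"
      using False fs g monoid.m_closed[OF group.is_monoid[OF G]] by (auto simp: supp_delta)
    show ?thesis using False unfolding GR_mult by (simp only: e sum.empty if_False)
  qed
qed

lemma zero_GR_mult: "(\<lambda>x. 0) \<otimes>\<^bsub>group_ring G\<^esub> f = (\<lambda>x. 0)"
  by (simp add: GR_mult supp_zero)

lemma GR_one_mult:
  assumes G: "group G" and f: "f \<in> carrier (group_ring G)"
  shows "\<one>\<^bsub>group_ring G\<^esub> \<otimes>\<^bsub>group_ring G\<^esub> f = f"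
proof
  fix x
  have fs: "supp f \<subseteq> carrier G" using f by (simp add: GR_carrier)
  show "(\<one>\<^bsub>group_ring G\<^esub> \<otimes>\<^bsub>group_ring G\<^esub> f) x = f x"
    using delta_mult_left[OF G monoid.one_closed[OF group.is_monoid[OF G]] f, of x] fs
    by (auto simp: GR_one supp_def monoid.l_one[OF group.is_monoid[OF G]] monoid.inv_one[OF group.is_monoid[OF G]])
qed

type_synonym K = "(rat poly \<Rightarrow>\<^sub>0 rat) fract"
type_synonym V = "int \<Rightarrow> K"
type_synonym Op = "V \<Rightarrow> V"

definition Wop :: "(int \<Rightarrow> K) \<Rightarrow> int \<Rightarrow> Op" where
  "Wop c n = (\<lambda>v j. c j * v (j - n))"

lemma Wop_apply: "Wop c n v j = c j * v (j - n)"
  by (simp add: Wop_def)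

lemma Wop_comp: "Wop c n \<circ> Wop d k = Wop (\<lambda>j. c j * d (j - n)) (n + k)"
  by (simp add: Wop_def fun_eq_iff algebra_simps)

lemma Wop_comp': "Wop c n (Wop d k v) = Wop (\<lambda>j. c j * d (j - n)) (n + k) v"
  using Wop_comp[of c n d k] by (metis comp_apply)

lemma Wop_add_coef: "Wop c n + Wop d n = Wop (\<lambda>j. c j + d j) n"
  by (simp add: Wop_def fun_eq_iff algebra_simps)

lemma Wop_zero_coef: "Wop (\<lambda>j. 0) n = 0"
  by (simp add: Wop_def fun_eq_iff)

lemma Wop_one: "Wop (\<lambda>j. 1) 0 = id"
  by (simp add: Wop_def fun_eq_iff)

lemma Wop_uminus: "- Wop c n = Wop (\<lambda>j. - c j) n"
  by (simp add: Wop_def fun_eq_iff)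

lemma Wop_additive: "Wop c n (v + w) = Wop c n v + Wop c n w"
  by (simp add: Wop_def fun_eq_iff algebra_simps)

lemma Wop_zero: "Wop c n 0 = 0"
  by (simp add: Wop_def fun_eq_iff)

lemma Wop_inj: "Wop c n = Wop d n \<Longrightarrow> c = d"
proof -
  assume "Wop c n = Wop d n"
  then have "Wop c n (\<lambda>j. 1) = Wop d n (\<lambda>j. 1)" by simp
  then show "c = d" by (simp add: Wop_def)
qed

lemma fsum_apply: "(sum F A) x = sum (\<lambda>i. F i x) A"
  by (induction A rule: infinite_finite_induct) auto

definition addop :: "Op \<Rightarrow> bool" where
  "addop f \<longleftrightarrow> (\<forall>v w. f (v + w) = f v + f w)"

lemma addop_zero: "addop f \<Longrightarrow> f 0 = 0"
  unfolding addop_def by (metis add_cancel_right_right add_0)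

lemma addop_sum: "addop f \<Longrightarrow> f (sum F A) = sum (\<lambda>i. f (F i)) A"
  by (induction A rule: infinite_finite_induct) (auto simp: addop_zero addop_def)

lemma addop_Wop: "addop (Wop c n)"
  by (simp add: addop_def Wop_additive)

lemma comp_sum_left: "(sum F A) \<circ> h = sum (\<lambda>i. F i \<circ> h) A"
  by (simp add: fun_eq_iff fsum_apply)

lemma comp_sum_right: "addop h \<Longrightarrow> h \<circ> (sum F A) = sum (\<lambda>i. h \<circ> F i) A"
  by (simp add: fun_eq_iff fsum_apply addop_sum)

lemma comp_add_left: "(f + g) \<circ> h = (f \<circ> h) + (g \<circ> (h :: Op))"
  by (simp add: fun_eq_iff)

lemma comp_add_right: "addop h \<Longrightarrow> h \<circ> (f + g) = (h \<circ> f) + (h \<circ> (g :: Op))"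
  by (simp add: fun_eq_iff addop_def)

lemma addop_add: "addop f \<Longrightarrow> addop g \<Longrightarrow> addop (f + g)"
  by (simp add: addop_def algebra_simps)

lemma addop_comp: "addop f \<Longrightarrow> addop g \<Longrightarrow> addop (f \<circ> g)"
  by (simp add: addop_def)

definition fr :: "(rat poly \<Rightarrow>\<^sub>0 rat) \<Rightarrow> K" where
  "fr p = Fract p 1"

lemma fr_add: "fr (a + b) = fr a + fr b"
  by (simp add: fr_def)

lemma fr_mult: "fr (a * b) = fr a * fr b"
  by (simp add: fr_def)

lemma fr_zero: "fr 0 = 0"
  by (simp add: fr_def Zero_fract_def)

lemma fr_one: "fr 1 = 1"
  by (simp add: fr_def One_fract_def)

lemma fr_uminus: "fr (- a) = - fr a"
  by (simp add: fr_def)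

lemma fr_eq_0_iff: "fr a = 0 \<longleftrightarrow> a = 0"
  by (simp add: fr_def Zero_fract_def eq_fract)

lemma fr_sum: "fr (sum F A) = sum (\<lambda>i. fr (F i)) A"
  by (induction A rule: infinite_finite_induct) (auto simp: fr_zero fr_add)

context fixes m :: nat assumes m: "0 < m"
begin

definition monoc :: "rat poly \<times> int \<Rightarrow> rat \<Rightarrow> int \<Rightarrow> K" where
  "monoc g r = (\<lambda>j. fr (Poly_Mapping.single (tpow m j (fst g)) r))"

definition Eop :: "rat poly \<times> int \<Rightarrow> rat \<Rightarrow> Op" where
  "Eop g r = Wop (monoc g r) (snd g)"

definition phi :: "(rat poly \<times> int \<Rightarrow> rat) \<Rightarrow> Op" where
  "phi a = (\<Sum>g\<in>supp a. Eop g (a g))"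

lemma Eop_zero: "Eop g 0 = 0"
  by (simp add: Eop_def monoc_def fr_zero Wop_zero_coef)

lemma Eop_add: "Eop g (r + r') = Eop g r + Eop g r'"
  by (simp add: Eop_def monoc_def single_add fr_add Wop_add_coef)

lemma Eop_sum: "Eop g (sum F A) = sum (\<lambda>i. Eop g (F i)) A"
  by (induction A rule: infinite_finite_induct) (auto simp: Eop_zero Eop_add)

lemma addop_Eop: "addop (Eop g r)"
  by (simp add: Eop_def addop_Wop)

lemma Eop_mult:
  assumes "g \<in> carrier (Gamma1 m)" "h \<in> carrier (Gamma1 m)"
  shows "Eop g r \<circ> Eop h r' = Eop (g \<otimes>\<^bsub>Gamma1 m\<^esub> h) (r * r')"
proof -
  obtain s1 n1 s2 n2 where gh: "g = (s1, n1)" "h = (s2, n2)" by (cases g, cases h) auto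
  have "\<And>j. tpow m j s1 + tpow m (j - n1) s2 = tpow m j (s1 + tpow m (- n1) s2)"
    by (simp add: tpow_add[OF m] tpow_tpow)
  then show ?thesis
    by (simp add: gh Eop_def Wop_comp monoc_def G_mult[OF m] fr_mult[symmetric] mult_single)
qed

lemma phi_superset:
  assumes "finite F" "supp a \<subseteq> F"
  shows "phi a = (\<Sum>g\<in>F. Eop g (a g))"
  unfolding phi_def
  by (rule sum.mono_neutral_left[OF assms]) (auto simp: supp_def Eop_zero)

lemma A_carrier: "a \<in> carrier (QGamma1 m) \<longleftrightarrow> finite (supp a) \<and> supp a \<subseteq> S_car m \<times> UNIV"
  by (simp add: QGamma1_def GR_carrier G_carrier[OF m])

lemma phi_add:
  assumes "a \<in> carrier (QGamma1 m)" "b \<in> carrier (QGamma1 m)"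
  shows "phi (a \<oplus>\<^bsub>QGamma1 m\<^esub> b) = phi a + phi b"
proof -
  have fin: "finite (supp a \<union> supp b)" using assms by (simp add: A_carrier)
  have "supp (a \<oplus>\<^bsub>QGamma1 m\<^esub> b) \<subseteq> supp a \<union> supp b"
    by (auto simp: supp_def QGamma1_def GR_add)
  then have "phi (a \<oplus>\<^bsub>QGamma1 m\<^esub> b) = (\<Sum>g\<in>supp a \<union> supp b. Eop g (a g + b g))"
    using phi_superset[OF fin] by (simp add: QGamma1_def GR_add)
  also have "\<dots> = (\<Sum>g\<in>supp a \<union> supp b. Eop g (a g)) + (\<Sum>g\<in>supp a \<union> supp b. Eop g (b g))"
    by (simp add: Eop_add sum.distrib)
  also have "\<dots> = phi a + phi b"
    using phi_superset[OF fin, of a] phi_superset[OF fin, of b] by simp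
  finally show ?thesis .
qed

lemma phi_zero: "phi (\<lambda>x. 0) = 0"
  by (simp add: phi_def supp_zero)

lemma phi_one: "phi \<one>\<^bsub>QGamma1 m\<^esub> = id"
proof -
  have "\<one>\<^bsub>QGamma1 m\<^esub> = delta (0, 0)"
    by (simp add: QGamma1_def GR_one G_one[OF m])
  moreover have "Eop (0, 0) 1 = id"
    by (simp add: Eop_def monoc_def tpow_zero fr_one Wop_one)
  moreover have "phi (delta (0::rat poly, 0::int)) = Eop (0, 0) (delta (0::rat poly, 0::int) (0, 0))"
    by (simp add: phi_def supp_delta)
  moreover have "delta (0::rat poly, 0::int) (0, 0) = (1::rat)" by (simp add: delta_def)
  ultimately show ?thesis by simp
qed

lemma phi_mult:
  assumes a: "a \<in> carrier (QGamma1 m)" and b: "b \<in> carrier (QGamma1 m)"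
  shows "phi (a \<otimes>\<^bsub>QGamma1 m\<^esub> b) = phi a \<circ> phi b"
proof -
  let ?G = "Gamma1 m"
  let ?P = "supp a \<times> supp b"
  let ?f = "\<lambda>(y, z). y \<otimes>\<^bsub>?G\<^esub> z"
  let ?F = "?f ` ?P"
  let ?h = "\<lambda>p. Eop (fst p \<otimes>\<^bsub>?G\<^esub> snd p) (a (fst p) * b (snd p))"
  have fa: "finite (supp a)" "supp a \<subseteq> carrier ?G" and fb: "finite (supp b)" "supp b \<subseteq> carrier ?G"
    using a b by (auto simp: QGamma1_def GR_carrier)
  have finP: "finite ?P" using fa fb by simp
  have finF: "finite ?F" using finP by simp
  have sub: "supp (a \<otimes>\<^bsub>QGamma1 m\<^esub> b) \<subseteq> ?F"
    using supp_GR_mult[of ?G a b] by (simp add: QGamma1_def)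
  have "phi (a \<otimes>\<^bsub>QGamma1 m\<^esub> b) = (\<Sum>x\<in>?F. Eop x ((a \<otimes>\<^bsub>QGamma1 m\<^esub> b) x))"
    by (rule phi_superset[OF finF sub])
  also have "\<dots> = (\<Sum>x\<in>?F. sum ?h {p. p \<in> ?P \<and> ?f p = x})"
  proof (rule sum.cong[OF refl])
    fix x assume "x \<in> ?F"
    have e: "{(y, z). y \<in> supp a \<and> z \<in> supp b \<and> y \<otimes>\<^bsub>?G\<^esub> z = x} = {p. p \<in> ?P \<and> ?f p = x}"
      by auto
    have "(a \<otimes>\<^bsub>QGamma1 m\<^esub> b) x = (\<Sum>p\<in>{p. p \<in> ?P \<and> ?f p = x}. a (fst p) * b (snd p))"
      unfolding QGamma1_def GR_mult e by (simp add: case_prod_beta)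
    then have "Eop x ((a \<otimes>\<^bsub>QGamma1 m\<^esub> b) x) = (\<Sum>p\<in>{p. p \<in> ?P \<and> ?f p = x}. Eop x (a (fst p) * b (snd p)))"
      by (simp add: Eop_sum)
    also have "\<dots> = sum ?h {p. p \<in> ?P \<and> ?f p = x}"
      by (rule sum.cong) (auto simp: case_prod_beta)
    finally show "Eop x ((a \<otimes>\<^bsub>QGamma1 m\<^esub> b) x) = sum ?h {p. p \<in> ?P \<and> ?f p = x}" .
  qed
  also have "\<dots> = sum ?h ?P"
    by (rule sum.group[OF finP finF]) simp
  also have "\<dots> = (\<Sum>p\<in>?P. Eop (fst p) (a (fst p)) \<circ> Eop (snd p) (b (snd p)))"
  proof (rule sum.cong[OF refl])
    fix p assume "p \<in> ?P"
    then have "fst p \<in> carrier ?G" "snd p \<in> carrier ?G" using fa fb by auto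
    then show "?h p = Eop (fst p) (a (fst p)) \<circ> Eop (snd p) (b (snd p))"
      by (simp add: Eop_mult)
  qed
  also have "\<dots> = (\<Sum>y\<in>supp a. \<Sum>z\<in>supp b. Eop y (a y) \<circ> Eop z (b z))"
    by (simp add: sum.cartesian_product case_prod_beta)
  also have "\<dots> = (\<Sum>y\<in>supp a. Eop y (a y) \<circ> phi b)"
    by (simp add: phi_def comp_sum_right[OF addop_Eop])
  also have "\<dots> = phi a \<circ> phi b"
    by (simp add: phi_def comp_sum_left)
  finally show ?thesis .
qed

definition ev :: "int \<Rightarrow> V" where
  "ev k = (\<lambda>i. if i = k then 1 else 0)"

lemma phi_ev_nz:
  assumes a: "a \<in> carrier (QGamma1 m)" and sd: "(s0, d) \<in> supp a"
  shows "phi a (ev k) (k + d) \<noteq> 0"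
proof -
  have fa: "finite (supp a)" "supp a \<subseteq> S_car m \<times> UNIV" using a by (auto simp: A_carrier)
  let ?P = "\<Sum>g\<in>supp a. (if snd g = d then Poly_Mapping.single (tpow m (k + d) (fst g)) (a g) else 0)"
  have "phi a (ev k) (k + d) = (\<Sum>g\<in>supp a. Eop g (a g) (ev k) (k + d))"
    by (simp add: phi_def fsum_apply)
  also have "\<dots> = (\<Sum>g\<in>supp a. fr (if snd g = d then Poly_Mapping.single (tpow m (k + d) (fst g)) (a g) else 0))"
    by (rule sum.cong[OF refl]) (auto simp: Eop_def Wop_apply ev_def monoc_def fr_zero)
  also have "\<dots> = fr ?P" by (simp add: fr_sum)
  finally have e: "phi a (ev k) (k + d) = fr ?P" .
  have "Poly_Mapping.lookup ?P (tpow m (k + d) s0) = (\<Sum>g\<in>supp a. Poly_Mapping.lookup (if snd g = d then Poly_Mapping.single (tpow m (k + d) (fst g)) (a g) else 0) (tpow m (k + d) s0))"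
    by (rule lookup_sum)
  also have "\<dots> = (\<Sum>g\<in>supp a. (if g = (s0, d) then a g else 0))"
  proof (rule sum.cong[OF refl])
    fix g assume g: "g \<in> supp a"
    obtain s n where gs: "g = (s, n)" by (cases g)
    have sS: "s \<in> S_car m" using g fa gs by auto
    have s0S: "s0 \<in> S_car m" using sd fa by auto
    show "Poly_Mapping.lookup (if snd g = d then Poly_Mapping.single (tpow m (k + d) (fst g)) (a g) else 0) (tpow m (k + d) s0)
        = (if g = (s0, d) then a g else 0)"
      using tpow_inj[OF sS s0S, of "k + d"] by (auto simp: gs lookup_single when_def)
  qed
  also have "\<dots> = a (s0, d)" using sd fa by (simp add: sum.delta)
  finally have "Poly_Mapping.lookup ?P (tpow m (k + d) s0) \<noteq> 0" using sd by (simp add: supp_def)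
  then have "?P \<noteq> 0" by auto
  then show ?thesis using e by (simp add: fr_eq_0_iff)
qed

lemma phi_inj:
  assumes a: "a \<in> carrier (QGamma1 m)" and z: "phi a = 0"
  shows "a = (\<lambda>x. 0)"
proof (rule ccontr)
  assume "a \<noteq> (\<lambda>x. 0)"
  then have "supp a \<noteq> {}" using supp_empty_iff by metis
  then obtain g where "g \<in> supp a" by blast
  then obtain s0 d where sd: "(s0, d) \<in> supp a" by (cases g) auto
  show False using phi_ev_nz[OF a sd, of 0] z by simp
qed

definition iota :: "(rat poly \<times> int \<Rightarrow> rat) \<Rightarrow> int \<Rightarrow> K" where
  "iota x = (\<lambda>j. \<Sum>g\<in>supp x. monoc g (x g) j)"

definition QS :: "(rat poly \<times> int \<Rightarrow> rat) set" where
  "QS = {x \<in> carrier (QGamma1 m). supp x \<subseteq> S_car m \<times> {0}}"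

lemma Wop_sum_coef: "sum (\<lambda>i. Wop (c i) n) A = Wop (\<lambda>j. sum (\<lambda>i. c i j) A) n"
  by (induction A rule: infinite_finite_induct) (auto simp: Wop_zero_coef Wop_add_coef)

lemma phi_QS: "x \<in> QS \<Longrightarrow> phi x = Wop (iota x) 0"
proof -
  assume x: "x \<in> QS"
  then have "\<And>g. g \<in> supp x \<Longrightarrow> snd g = 0" by (auto simp: QS_def)
  then have "phi x = (\<Sum>g\<in>supp x. Wop (monoc g (x g)) 0)"
    unfolding phi_def Eop_def by (intro sum.cong) auto
  then show ?thesis by (simp add: Wop_sum_coef iota_def)
qed

lemma iota_nz:
  assumes x: "x \<in> QS" "x \<noteq> (\<lambda>x. 0)"
  shows "iota x j \<noteq> 0"
proof -
  have "supp x \<noteq> {}" using supp_empty_iff x(2) by metis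
  then obtain g where "g \<in> supp x" by blast
  then obtain s0 d where sd: "(s0, d) \<in> supp x" by (cases g) auto
  then have d: "d = 0" using x(1) by (auto simp: QS_def)
  have xc: "x \<in> carrier (QGamma1 m)" using x(1) by (simp add: QS_def)
  have "phi x (ev j) (j + 0) \<noteq> 0" using phi_ev_nz[OF xc sd, of j] d by simp
  then show ?thesis by (simp add: phi_QS[OF x(1)] Wop_apply ev_def)
qed

end

context fixes m :: nat assumes m: "0 < m"
begin

lemma T1_eq: "T1 m = QS m - {\<lambda>x. 0}"
  by (auto simp: T1_def sub_group_ring_def derived_eq[OF m] QS_def[OF m] QGamma1_def)

lemma QS_carrier: "x \<in> QS m \<Longrightarrow> x \<in> carrier (QGamma1 m)"
  by (simp add: QS_def[OF m])

lemma iota_zero: "iota m (\<lambda>x. 0) = (\<lambda>j. 0)"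
  by (simp add: iota_def[OF m] supp_zero)

lemma deg0:
  assumes a: "a \<in> carrier (QGamma1 m)" and p: "phi m a = Wop c 0"
  shows "a \<in> QS m"
proof -
  have "supp a \<subseteq> S_car m \<times> {0}"
  proof
    fix g assume g: "g \<in> supp a"
    obtain s d where gs: "g = (s, d)" by (cases g)
    have "s \<in> S_car m" using g gs a by (auto simp: A_carrier[OF m])
    moreover have "d = 0"
    proof (rule ccontr)
      assume "d \<noteq> 0"
      then have "Wop c 0 (ev 0) (0 + d) = 0" by (simp add: Wop_apply ev_def[OF m])
      then show False using phi_ev_nz[OF m a g[unfolded gs], of 0] p by simp
    qed
    ultimately show "g \<in> S_car m \<times> {0}" using gs by simp
  qed
  then show ?thesis using a by (simp add: QS_def[OF m])
qed

lemma A_one: "\<one>\<^bsub>QGamma1 m\<^esub> = delta (0, 0)"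
  by (simp add: QGamma1_def GR_one G_one[OF m])

lemma delta_carrierA: "s \<in> S_car m \<Longrightarrow> delta (s, n) \<in> carrier (QGamma1 m)"
  by (simp add: A_carrier[OF m] supp_delta)

lemma one_QS: "\<one>\<^bsub>QGamma1 m\<^esub> \<in> QS m"
  by (simp add: A_one QS_def[OF m] delta_carrierA S_zero[OF m] supp_delta)

lemma iota_one: "iota m \<one>\<^bsub>QGamma1 m\<^esub> = (\<lambda>j. 1)"
proof -
  have "Wop (iota m \<one>\<^bsub>QGamma1 m\<^esub>) 0 = Wop (\<lambda>j. 1) 0"
    using phi_QS[OF m one_QS] phi_one[OF m] Wop_one by simp
  then show ?thesis by (rule Wop_inj)
qed

lemma one_T: "\<one>\<^bsub>QGamma1 m\<^esub> \<in> T1 m"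
proof -
  have "\<one>\<^bsub>QGamma1 m\<^esub> \<noteq> (\<lambda>x. 0)"
    using iota_one iota_zero by (metis zero_neq_one)
  then show ?thesis using one_QS by (simp add: T1_eq)
qed

lemma G_monoid: "monoid (Gamma1 m)"
  using group.is_monoid[OF G_group[OF m]] .

lemma A_mult_closed: "a \<in> carrier (QGamma1 m) \<Longrightarrow> b \<in> carrier (QGamma1 m) \<Longrightarrow> a \<otimes>\<^bsub>QGamma1 m\<^esub> b \<in> carrier (QGamma1 m)"
  unfolding QGamma1_def by (rule GR_mult_closed[OF G_monoid])

lemma QS_mult:
  assumes x: "x \<in> QS m" and y: "y \<in> QS m"
  shows "x \<otimes>\<^bsub>QGamma1 m\<^esub> y \<in> QS m" "iota m (x \<otimes>\<^bsub>QGamma1 m\<^esub> y) = (\<lambda>j. iota m x j * iota m y j)"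
proof -
  have xc: "x \<in> carrier (QGamma1 m)" and yc: "y \<in> carrier (QGamma1 m)" using x y by (auto simp: QS_def[OF m])
  have p: "phi m (x \<otimes>\<^bsub>QGamma1 m\<^esub> y) = Wop (\<lambda>j. iota m x j * iota m y j) 0"
    using phi_mult[OF m xc yc] phi_QS[OF m x] phi_QS[OF m y] by (simp add: Wop_comp)
  show q: "x \<otimes>\<^bsub>QGamma1 m\<^esub> y \<in> QS m" by (rule deg0[OF A_mult_closed[OF xc yc] p])
  show "iota m (x \<otimes>\<^bsub>QGamma1 m\<^esub> y) = (\<lambda>j. iota m x j * iota m y j)"
    using p phi_QS[OF m q] Wop_inj by metis
qed

lemma T_mult:
  assumes t: "t \<in> T1 m" and u: "u \<in> T1 m"
  shows "t \<otimes>\<^bsub>QGamma1 m\<^esub> u \<in> T1 m"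
proof -
  have tq: "t \<in> QS m" "t \<noteq> (\<lambda>x. 0)" and uq: "u \<in> QS m" "u \<noteq> (\<lambda>x. 0)" using t u by (auto simp: T1_eq)
  have "iota m (t \<otimes>\<^bsub>QGamma1 m\<^esub> u) 0 \<noteq> 0"
    using QS_mult(2)[OF tq(1) uq(1)] iota_nz[OF m tq] iota_nz[OF m uq] by simp
  then have "t \<otimes>\<^bsub>QGamma1 m\<^esub> u \<noteq> (\<lambda>x. 0)" using iota_zero by auto
  then show ?thesis using QS_mult(1)[OF tq(1) uq(1)] by (simp add: T1_eq)
qed

lemma phi_delta_shift: "phi m (delta (0, n)) = Wop (\<lambda>j. 1) n"
proof -
  have "phi m (delta (0, n)) = Eop m (0, n) (delta (0::rat poly, n) (0, n))"
    by (simp add: phi_def[OF m] supp_delta)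
  also have "\<dots> = Wop (\<lambda>j. 1) n"
    by (simp add: Eop_def[OF m] monoc_def[OF m] delta_def tpow_zero fr_one)
  finally show ?thesis .
qed

lemma QS_shift:
  assumes x: "x \<in> QS m"
  shows "\<exists>x'\<in>QS m. iota m x' = (\<lambda>j. iota m x (j - n)) \<and> (x \<noteq> (\<lambda>x. 0) \<longrightarrow> x' \<noteq> (\<lambda>x. 0))"
proof -
  let ?x' = "delta (0, n) \<otimes>\<^bsub>QGamma1 m\<^esub> x \<otimes>\<^bsub>QGamma1 m\<^esub> delta (0, - n)"
  have xc: "x \<in> carrier (QGamma1 m)" using x by (simp add: QS_def[OF m])
  have d1: "delta (0, n) \<in> carrier (QGamma1 m)" and d2: "delta (0, - n) \<in> carrier (QGamma1 m)"
    using delta_carrierA[OF S_zero[OF m]] by auto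
  have c1: "delta (0, n) \<otimes>\<^bsub>QGamma1 m\<^esub> x \<in> carrier (QGamma1 m)" by (rule A_mult_closed[OF d1 xc])
  have c2: "?x' \<in> carrier (QGamma1 m)" by (rule A_mult_closed[OF c1 d2])
  have p: "phi m ?x' = Wop (\<lambda>j. iota m x (j - n)) 0"
    using phi_mult[OF m c1 d2] phi_mult[OF m d1 xc] phi_QS[OF m x] phi_delta_shift
    by (simp add: Wop_comp)
  have q: "?x' \<in> QS m" by (rule deg0[OF c2 p])
  have i: "iota m ?x' = (\<lambda>j. iota m x (j - n))"
    using p phi_QS[OF m q] Wop_inj by metis
  have "x \<noteq> (\<lambda>x. 0) \<longrightarrow> ?x' \<noteq> (\<lambda>x. 0)"
  proof
    assume "x \<noteq> (\<lambda>x. 0)"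
    then have "iota m x (0 - n) \<noteq> 0" using iota_nz[OF m x] by blast
    then show "?x' \<noteq> (\<lambda>x. 0)" using i iota_zero by (metis)
  qed
  then show ?thesis using q i by blast
qed

lemma QS_neg:
  assumes x: "x \<in> QS m"
  shows "(\<lambda>g. - x g) \<in> QS m" "iota m (\<lambda>g. - x g) = (\<lambda>j. - iota m x j)"
proof -
  have s: "supp (\<lambda>g. - x g) = supp x" by (simp add: supp_def)
  show "(\<lambda>g. - x g) \<in> QS m" using x by (simp add: QS_def[OF m] A_carrier[OF m] s)
  show "iota m (\<lambda>g. - x g) = (\<lambda>j. - iota m x j)"
    by (simp add: iota_def[OF m] s monoc_def[OF m] single_uminus fr_uminus sum_negf)
qed

lemma QS_sd:
  assumes s: "s \<in> S_car m"
  shows "(\<lambda>h. if h = (s, 0) then r else 0) \<in> QS m"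
    "iota m (\<lambda>h. if h = (s, 0) then r else 0) = monoc m (s, n) r"
proof -
  have sp: "supp (\<lambda>h. if h = (s, 0) then r else 0) = (if r = 0 then {} else {(s, 0)})"
    by (auto simp: supp_def)
  show "(\<lambda>h. if h = (s, 0) then r else 0) \<in> QS m"
    using s by (simp add: QS_def[OF m] A_carrier[OF m] sp)
  show "iota m (\<lambda>h. if h = (s, 0) then r else 0) = monoc m (s, n) r"
    by (auto simp: iota_def[OF m] sp monoc_def[OF m] fr_zero fun_eq_iff)
qed

definition Cset :: "(int \<Rightarrow> K) set" where
  "Cset = {c. \<exists>x y. x \<in> QS m \<and> y \<in> QS m \<and> y \<noteq> (\<lambda>x. 0) \<and> c = (\<lambda>j. iota m x j / iota m y j)}"

lemma C_one: "(\<lambda>j. 1) \<in> Cset"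
proof -
  have "\<one>\<^bsub>QGamma1 m\<^esub> \<noteq> (\<lambda>x. 0)" using one_T by (simp add: T1_eq)
  then show ?thesis unfolding Cset_def using one_QS iota_one by force
qed

lemma C_mult: "c \<in> Cset \<Longrightarrow> d \<in> Cset \<Longrightarrow> (\<lambda>j. c j * d j) \<in> Cset"
proof -
  assume "c \<in> Cset" "d \<in> Cset"
  then obtain x y x' y' where xy: "x \<in> QS m" "y \<in> QS m" "y \<noteq> (\<lambda>x. 0)" "c = (\<lambda>j. iota m x j / iota m y j)"
    and xy': "x' \<in> QS m" "y' \<in> QS m" "y' \<noteq> (\<lambda>x. 0)" "d = (\<lambda>j. iota m x' j / iota m y' j)"
    unfolding Cset_def by blast
  have yy: "y \<otimes>\<^bsub>QGamma1 m\<^esub> y' \<in> T1 m" using T_mult xy xy' by (simp add: T1_eq)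
  show ?thesis unfolding Cset_def
    apply (rule CollectI)
    apply (rule exI[of _ "x \<otimes>\<^bsub>QGamma1 m\<^esub> x'"], rule exI[of _ "y \<otimes>\<^bsub>QGamma1 m\<^esub> y'"])
    using yy QS_mult[OF xy(1) xy'(1)] QS_mult[OF xy(2) xy'(2)] xy xy'
    by (auto simp: T1_eq)
qed

lemma C_shift: "c \<in> Cset \<Longrightarrow> (\<lambda>j. c (j - n)) \<in> Cset"
proof -
  assume "c \<in> Cset"
  then obtain x y where xy: "x \<in> QS m" "y \<in> QS m" "y \<noteq> (\<lambda>x. 0)" "c = (\<lambda>j. iota m x j / iota m y j)"
    unfolding Cset_def by blast
  obtain x' where x': "x' \<in> QS m" "iota m x' = (\<lambda>j. iota m x (j - n))" using QS_shift[OF xy(1), of n] by blast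
  obtain y' where y': "y' \<in> QS m" "iota m y' = (\<lambda>j. iota m y (j - n))" "y' \<noteq> (\<lambda>x. 0)"
    using QS_shift[OF xy(2), of n] xy(3) by blast
  show ?thesis unfolding Cset_def
    apply (rule CollectI, rule exI[of _ x'], rule exI[of _ y'])
    using x' y' xy(4) by auto
qed

lemma C_uminus: "c \<in> Cset \<Longrightarrow> (\<lambda>j. - c j) \<in> Cset"
proof -
  assume "c \<in> Cset"
  then obtain x y where xy: "x \<in> QS m" "y \<in> QS m" "y \<noteq> (\<lambda>x. 0)" "c = (\<lambda>j. iota m x j / iota m y j)"
    unfolding Cset_def by blast
  show ?thesis unfolding Cset_def
    apply (rule CollectI)
    apply (rule exI[of _ "\<lambda>g. - x g"], rule exI[of _ y])
    using QS_neg[OF xy(1)] xy by auto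
qed

lemma C_mono: "g \<in> carrier (Gamma1 m) \<Longrightarrow> monoc m g r \<in> Cset"
proof -
  assume g: "g \<in> carrier (Gamma1 m)"
  obtain s n where gs: "g = (s, n)" by (cases g)
  have s: "s \<in> S_car m" using g gs by (simp add: G_carrier[OF m])
  have "\<one>\<^bsub>QGamma1 m\<^esub> \<noteq> (\<lambda>x. 0)" using one_T by (simp add: T1_eq)
  then show ?thesis unfolding Cset_def gs
    using QS_sd(1)[OF s, of r] QS_sd(2)[OF s, of r n] one_QS iota_one by force
qed

lemma C_inv: "t \<in> T1 m \<Longrightarrow> (\<lambda>j. inverse (iota m t j)) \<in> Cset"
proof -
  assume "t \<in> T1 m"
  then have "t \<in> QS m" "t \<noteq> (\<lambda>x. 0)" by (auto simp: T1_eq)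
  then show ?thesis unfolding Cset_def using one_QS iota_one
    by (intro CollectI exI[of _ "\<one>\<^bsub>QGamma1 m\<^esub>"] exI[of _ t]) (simp add: divide_inverse)
qed

end

inductive_set Lin :: "nat \<Rightarrow> Op set" for m where
  Lin0: "0 \<in> Lin m"
| LinW: "c \<in> Cset m \<Longrightarrow> f \<in> Lin m \<Longrightarrow> Wop c n + f \<in> Lin m"

lemma GR_add_closed: "a \<in> carrier (group_ring G) \<Longrightarrow> b \<in> carrier (group_ring G) \<Longrightarrow> a \<oplus>\<^bsub>group_ring G\<^esub> b \<in> carrier (group_ring G)"
proof -
  assume a: "a \<in> carrier (group_ring G)" and b: "b \<in> carrier (group_ring G)"
  have "supp (a \<oplus>\<^bsub>group_ring G\<^esub> b) \<subseteq> supp a \<union> supp b" by (auto simp: supp_def GR_add)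
  then show ?thesis using a b by (auto simp: GR_carrier intro: finite_subset)
qed

definition R0 :: "nat \<Rightarrow> Op ring" where
  "R0 m = \<lparr>carrier = Lin m, mult = (\<lambda>f g. f \<circ> g), one = id, zero = 0, add = (\<lambda>f g. f + g)\<rparr>"

definition Winv :: "nat \<Rightarrow> (rat poly \<times> int \<Rightarrow> rat) \<Rightarrow> Op" where
  "Winv m t = Wop (\<lambda>j. inverse (iota m t j)) 0"

context fixes m :: nat assumes m: "0 < m"
begin

lemma Lin_addop: "f \<in> Lin m \<Longrightarrow> addop f"
  by (induction rule: Lin.induct) (auto simp: addop_def Wop_additive algebra_simps)

lemma Lin_add: "f \<in> Lin m \<Longrightarrow> g \<in> Lin m \<Longrightarrow> f + g \<in> Lin m"
proof (induction rule: Lin.induct)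
  case Lin0 then show ?case by simp
next
  case (LinW c f n)
  then have "f + g \<in> Lin m" by blast
  then show ?case unfolding add.assoc by (rule Lin.LinW[OF LinW.hyps(1)])
qed

lemma Lin_Wop: "c \<in> Cset m \<Longrightarrow> Wop c n \<in> Lin m"
  using Lin.LinW[OF _ Lin.Lin0] by fastforce

lemma Lin_comp_Wop: "g \<in> Lin m \<Longrightarrow> c \<in> Cset m \<Longrightarrow> Wop c n \<circ> g \<in> Lin m"
proof (induction rule: Lin.induct)
  case Lin0
  have e: "Wop c n \<circ> 0 = 0" by (simp add: fun_eq_iff Wop_def)
  show ?case unfolding e by (rule Lin.Lin0)
next
  case (LinW d f k)
  have "Wop c n \<circ> (Wop d k + f) = (Wop c n \<circ> Wop d k) + (Wop c n \<circ> f)"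
    by (rule comp_add_right[OF addop_Wop])
  also have "\<dots> = Wop (\<lambda>j. c j * d (j - n)) (n + k) + (Wop c n \<circ> f)"
    by (simp add: Wop_comp)
  also have "\<dots> \<in> Lin m"
  proof (rule Lin_add)
    show "Wop (\<lambda>j. c j * d (j - n)) (n + k) \<in> Lin m"
      by (rule Lin_Wop[OF C_mult[OF m LinW.prems C_shift[OF m LinW.hyps(1)]]])
    show "Wop c n \<circ> f \<in> Lin m" by (rule LinW.IH[OF LinW.prems])
  qed
  finally show ?case .
qed

lemma Lin_comp: "f \<in> Lin m \<Longrightarrow> g \<in> Lin m \<Longrightarrow> f \<circ> g \<in> Lin m"
proof (induction rule: Lin.induct)
  case Lin0
  have e: "(0::Op) \<circ> g = 0" by (simp add: fun_eq_iff)
  show ?case unfolding e by (rule Lin.Lin0)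
next
  case (LinW c f n)
  have e: "(Wop c n + f) \<circ> g = (Wop c n \<circ> g) + (f \<circ> g)" by (rule comp_add_left)
  have "Wop c n \<circ> g \<in> Lin m" by (rule Lin_comp_Wop[OF LinW.prems LinW.hyps(1)])
  moreover have "f \<circ> g \<in> Lin m" using LinW by blast
  ultimately show ?case unfolding e by (rule Lin_add)
qed

lemma Lin_uminus: "f \<in> Lin m \<Longrightarrow> - f \<in> Lin m"
proof (induction rule: Lin.induct)
  case Lin0 then show ?case unfolding minus_zero by (rule Lin.Lin0)
next
  case (LinW c f n)
  have e: "- (Wop c n + f) = Wop (\<lambda>j. - c j) n + (- f)" by (simp add: Wop_uminus)
  show ?case unfolding e by (rule Lin.LinW[OF C_uminus[OF m LinW.hyps(1)] LinW.IH])
qed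

lemma Lin_id: "id \<in> Lin m"
  using Lin_Wop[OF C_one[OF m], of 0] Wop_one by simp

lemma Lin_sum: "finite I \<Longrightarrow> (\<And>i. i \<in> I \<Longrightarrow> F i \<in> Lin m) \<Longrightarrow> sum F I \<in> Lin m"
  by (induction I rule: finite_induct) (auto intro: Lin.Lin0 Lin_add)

lemma R0_ring: "ring (R0 m)"
proof (rule ringI)
  show "abelian_group (R0 m)"
  proof (rule abelian_groupI)
    fix x y assume "x \<in> carrier (R0 m)" "y \<in> carrier (R0 m)"
    then show "x \<oplus>\<^bsub>R0 m\<^esub> y \<in> carrier (R0 m)" by (simp add: R0_def Lin_add)
  next
    show "\<zero>\<^bsub>R0 m\<^esub> \<in> carrier (R0 m)" by (simp add: R0_def Lin.Lin0)
  next
    fix x y z assume "x \<in> carrier (R0 m)" "y \<in> carrier (R0 m)" "z \<in> carrier (R0 m)"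
    then show "x \<oplus>\<^bsub>R0 m\<^esub> y \<oplus>\<^bsub>R0 m\<^esub> z = x \<oplus>\<^bsub>R0 m\<^esub> (y \<oplus>\<^bsub>R0 m\<^esub> z)" by (simp add: R0_def add.assoc)
  next
    fix x y assume "x \<in> carrier (R0 m)" "y \<in> carrier (R0 m)"
    then show "x \<oplus>\<^bsub>R0 m\<^esub> y = y \<oplus>\<^bsub>R0 m\<^esub> x" by (simp add: R0_def add.commute)
  next
    fix x assume "x \<in> carrier (R0 m)"
    then show "\<zero>\<^bsub>R0 m\<^esub> \<oplus>\<^bsub>R0 m\<^esub> x = x" by (simp add: R0_def)
  next
    fix x assume "x \<in> carrier (R0 m)"
    then show "\<exists>y\<in>carrier (R0 m). y \<oplus>\<^bsub>R0 m\<^esub> x = \<zero>\<^bsub>R0 m\<^esub>"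
      by (intro bexI[of _ "- x"]) (simp_all add: R0_def Lin_uminus)
  qed
next
  show "monoid (R0 m)"
  proof (rule monoidI)
    fix x y assume "x \<in> carrier (R0 m)" "y \<in> carrier (R0 m)"
    then show "x \<otimes>\<^bsub>R0 m\<^esub> y \<in> carrier (R0 m)" by (simp add: R0_def Lin_comp)
  next
    show "\<one>\<^bsub>R0 m\<^esub> \<in> carrier (R0 m)" by (simp add: R0_def Lin_id)
  qed (auto simp: R0_def comp_assoc)
next
  fix x y z assume "x \<in> carrier (R0 m)" "y \<in> carrier (R0 m)" "z \<in> carrier (R0 m)"
  then show "(x \<oplus>\<^bsub>R0 m\<^esub> y) \<otimes>\<^bsub>R0 m\<^esub> z = x \<otimes>\<^bsub>R0 m\<^esub> z \<oplus>\<^bsub>R0 m\<^esub> y \<otimes>\<^bsub>R0 m\<^esub> z"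
    by (simp add: R0_def comp_add_left)
next
  fix x y z assume "x \<in> carrier (R0 m)" "y \<in> carrier (R0 m)" "z \<in> carrier (R0 m)"
  then show "z \<otimes>\<^bsub>R0 m\<^esub> (x \<oplus>\<^bsub>R0 m\<^esub> y) = z \<otimes>\<^bsub>R0 m\<^esub> x \<oplus>\<^bsub>R0 m\<^esub> z \<otimes>\<^bsub>R0 m\<^esub> y"
    by (simp add: R0_def comp_add_right Lin_addop)
qed

lemma phi_Lin: "a \<in> carrier (QGamma1 m) \<Longrightarrow> phi m a \<in> Lin m"
proof -
  assume a: "a \<in> carrier (QGamma1 m)"
  then have "finite (supp a)" "supp a \<subseteq> carrier (Gamma1 m)" by (auto simp: QGamma1_def GR_carrier)
  then show ?thesis unfolding phi_def[OF m] Eop_def[OF m]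
    by (intro Lin_sum Lin_Wop C_mono[OF m]) auto
qed

lemma phi_hom: "phi m \<in> ring_hom (QGamma1 m) (R0 m)"
  by (rule ring_hom_memI) (auto simp: R0_def phi_Lin phi_mult[OF m] phi_add[OF m] phi_one[OF m])

lemma phi_T: "t \<in> T1 m \<Longrightarrow> phi m t = Wop (iota m t) 0"
  using phi_QS[OF m] by (simp add: T1_eq[OF m])

lemma Winv_Lin: "t \<in> T1 m \<Longrightarrow> Winv m t \<in> Lin m"
  unfolding Winv_def by (rule Lin_Wop[OF C_inv[OF m]])

lemma phi_Winv: "t \<in> T1 m \<Longrightarrow> phi m t \<circ> Winv m t = id \<and> Winv m t \<circ> phi m t = id"
proof -
  assume t: "t \<in> T1 m"
  have nz: "\<And>j. iota m t j \<noteq> 0" using iota_nz[OF m] t by (simp add: T1_eq[OF m])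
  show ?thesis using nz by (simp add: phi_T[OF t] Winv_def Wop_comp Wop_one[symmetric])
qed

lemma phi_unit: "t \<in> T1 m \<Longrightarrow> phi m t \<in> Units (R0 m)"
  using phi_Winv Winv_Lin phi_Lin T1_eq[OF m] QS_carrier[OF m]
  by (auto simp: Units_def R0_def)

lemma inv_phi: "t \<in> T1 m \<Longrightarrow> inv\<^bsub>R0 m\<^esub> (phi m t) = Winv m t"
proof -
  assume t: "t \<in> T1 m"
  have "monoid (R0 m)" using ring.is_monoid[OF R0_ring] .
  then show ?thesis
    using monoid.inv_unique'[of "R0 m" "phi m t" "Winv m t"] phi_Winv[OF t] Winv_Lin[OF t]
      phi_Lin[OF QS_carrier[OF m]] t by (auto simp: R0_def T1_eq[OF m])
qed

lemma T_carrier: "t \<in> T1 m \<Longrightarrow> t \<in> carrier (QGamma1 m)"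
  by (simp add: T1_eq[OF m] QS_carrier[OF m])

lemma Winv_comp: "t \<in> T1 m \<Longrightarrow> u \<in> T1 m \<Longrightarrow> Winv m u \<circ> Winv m t = Winv m (t \<otimes>\<^bsub>QGamma1 m\<^esub> u)"
proof -
  assume t: "t \<in> T1 m" and u: "u \<in> T1 m"
  have "iota m (t \<otimes>\<^bsub>QGamma1 m\<^esub> u) = (\<lambda>j. iota m t j * iota m u j)"
    using QS_mult(2)[OF m] t u by (simp add: T1_eq[OF m])
  then show ?thesis by (simp add: Winv_def Wop_comp mult.commute)
qed

lemma rep_sum:
  assumes a: "a \<in> carrier (QGamma1 m)" and b: "b \<in> carrier (QGamma1 m)"
    and t: "t \<in> T1 m" and u: "u \<in> T1 m"
  shows "(phi m a \<circ> Winv m t) + (phi m b \<circ> Winv m u)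
       = phi m ((a \<otimes>\<^bsub>QGamma1 m\<^esub> u) \<oplus>\<^bsub>QGamma1 m\<^esub> (b \<otimes>\<^bsub>QGamma1 m\<^esub> t)) \<circ> Winv m (t \<otimes>\<^bsub>QGamma1 m\<^esub> u)"
proof -
  have tc: "t \<in> carrier (QGamma1 m)" and uc: "u \<in> carrier (QGamma1 m)" using t u by (auto simp: T_carrier)
  have ut: "u \<otimes>\<^bsub>QGamma1 m\<^esub> t \<in> T1 m" using T_mult[OF m u t] .
  have e1: "phi m a \<circ> Winv m t = phi m (a \<otimes>\<^bsub>QGamma1 m\<^esub> u) \<circ> Winv m (t \<otimes>\<^bsub>QGamma1 m\<^esub> u)"
  proof -
    have "phi m a \<circ> Winv m t = phi m a \<circ> (phi m u \<circ> Winv m u) \<circ> Winv m t"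
      using phi_Winv[OF u] by simp
    also have "\<dots> = (phi m a \<circ> phi m u) \<circ> (Winv m u \<circ> Winv m t)" by (simp add: comp_assoc)
    also have "\<dots> = phi m (a \<otimes>\<^bsub>QGamma1 m\<^esub> u) \<circ> Winv m (t \<otimes>\<^bsub>QGamma1 m\<^esub> u)"
      by (simp add: phi_mult[OF m a uc] Winv_comp[OF t u])
    finally show ?thesis .
  qed
  have e2: "phi m b \<circ> Winv m u = phi m (b \<otimes>\<^bsub>QGamma1 m\<^esub> t) \<circ> Winv m (t \<otimes>\<^bsub>QGamma1 m\<^esub> u)"
  proof -
    have "phi m b \<circ> Winv m u = phi m b \<circ> (phi m t \<circ> Winv m t) \<circ> Winv m u"
      using phi_Winv[OF t] by simp
    also have "\<dots> = (phi m b \<circ> phi m t) \<circ> (Winv m t \<circ> Winv m u)" by (simp add: comp_assoc)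
    also have "Winv m t \<circ> Winv m u = Winv m (t \<otimes>\<^bsub>QGamma1 m\<^esub> u)"
      using Winv_comp[OF u t] Winv_comp[OF t u] by (simp add: Winv_def Wop_comp mult.commute)
    also have "(phi m b \<circ> phi m t) = phi m (b \<otimes>\<^bsub>QGamma1 m\<^esub> t)"
      by (simp add: phi_mult[OF m b tc])
    finally show ?thesis .
  qed
  have c1: "a \<otimes>\<^bsub>QGamma1 m\<^esub> u \<in> carrier (QGamma1 m)" by (rule A_mult_closed[OF m a uc])
  have c2: "b \<otimes>\<^bsub>QGamma1 m\<^esub> t \<in> carrier (QGamma1 m)" by (rule A_mult_closed[OF m b tc])
  show ?thesis unfolding e1 e2 phi_add[OF m c1 c2] by (rule comp_add_left[symmetric])
qed

lemma rep: "f \<in> Lin m \<Longrightarrow> \<exists>a\<in>carrier (QGamma1 m). \<exists>t\<in>T1 m. f = phi m a \<circ> Winv m t"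
proof (induction rule: Lin.induct)
  case Lin0
  have z: "(\<lambda>x. 0) \<in> carrier (QGamma1 m)" by (simp add: A_carrier[OF m] supp_zero)
  have "(0::Op) = phi m (\<lambda>x. 0) \<circ> Winv m \<one>\<^bsub>QGamma1 m\<^esub>"
    by (simp add: phi_zero[OF m] fun_eq_iff)
  then show ?case using z one_T[OF m] by blast
next
  case (LinW c f n)
  obtain b u where bu: "b \<in> carrier (QGamma1 m)" "u \<in> T1 m" "f = phi m b \<circ> Winv m u" using LinW.IH by blast
  obtain x y where xy: "x \<in> QS m" "y \<in> QS m" "y \<noteq> (\<lambda>x. 0)" "c = (\<lambda>j. iota m x j / iota m y j)"
    using LinW.hyps(1) unfolding Cset_def[OF m] by blast
  obtain x' where x': "x' \<in> QS m" "iota m x' = (\<lambda>j. iota m x (j - - n))"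
    using QS_shift[OF m xy(1), of "- n"] by blast
  obtain y' where y': "y' \<in> QS m" "iota m y' = (\<lambda>j. iota m y (j - - n))" "y' \<noteq> (\<lambda>x. 0)"
    using QS_shift[OF m xy(2), of "- n"] xy(3) by blast
  have yT: "y' \<in> T1 m" using y' by (simp add: T1_eq[OF m])
  have d: "delta (0, n) \<in> carrier (QGamma1 m)" using delta_carrierA[OF m S_zero[OF m]] by blast
  have xc: "x' \<in> carrier (QGamma1 m)" using x' by (simp add: QS_carrier[OF m])
  have dx: "delta (0, n) \<otimes>\<^bsub>QGamma1 m\<^esub> x' \<in> carrier (QGamma1 m)" by (rule A_mult_closed[OF m d xc])
  have "phi m (delta (0, n) \<otimes>\<^bsub>QGamma1 m\<^esub> x') \<circ> Winv m y' = Wop (\<lambda>j. 1 * iota m x' (j - n) * inverse (iota m y' (j - n))) (n + 0 + 0)"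
    by (simp add: phi_mult[OF m d xc] phi_delta_shift[OF m] phi_QS[OF m x'(1)] Winv_def Wop_comp)
  also have "\<dots> = Wop c n"
    using x'(2) y'(2) xy(4) by (simp add: divide_inverse)
  finally have W: "Wop c n = phi m (delta (0, n) \<otimes>\<^bsub>QGamma1 m\<^esub> x') \<circ> Winv m y'" by simp
  show ?case unfolding W bu(3) using rep_sum[OF dx bu(1) yT bu(2)]
    A_mult_closed[OF m dx T_carrier[OF bu(2)]] A_mult_closed[OF m bu(1) T_carrier[OF yT]]
    T_mult[OF m yT bu(2)]
    by (metis QGamma1_def GR_add_closed)
qed

lemma kernel:
  assumes a: "a \<in> carrier (QGamma1 m)"
  shows "phi m a = \<zero>\<^bsub>R0 m\<^esub> \<longleftrightarrow> (\<exists>t\<in>T1 m. a \<otimes>\<^bsub>QGamma1 m\<^esub> t = \<zero>\<^bsub>QGamma1 m\<^esub>)"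
proof
  assume "phi m a = \<zero>\<^bsub>R0 m\<^esub>"
  then have "a = (\<lambda>x. 0)" using phi_inj[OF m a] by (simp add: R0_def)
  then have "a \<otimes>\<^bsub>QGamma1 m\<^esub> \<one>\<^bsub>QGamma1 m\<^esub> = \<zero>\<^bsub>QGamma1 m\<^esub>"
    by (simp add: QGamma1_def zero_GR_mult GR_zero)
  then show "\<exists>t\<in>T1 m. a \<otimes>\<^bsub>QGamma1 m\<^esub> t = \<zero>\<^bsub>QGamma1 m\<^esub>" using one_T[OF m] by blast
next
  assume "\<exists>t\<in>T1 m. a \<otimes>\<^bsub>QGamma1 m\<^esub> t = \<zero>\<^bsub>QGamma1 m\<^esub>"
  then obtain t where t: "t \<in> T1 m" "a \<otimes>\<^bsub>QGamma1 m\<^esub> t = \<zero>\<^bsub>QGamma1 m\<^esub>" by blast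
  have "phi m a \<circ> phi m t = 0"
    using phi_mult[OF m a T_carrier[OF t(1)]] t(2) phi_zero[OF m] by (simp add: QGamma1_def GR_zero)
  then have "phi m a = (phi m a \<circ> phi m t) \<circ> Winv m t"
    using phi_Winv[OF t(1)] by (metis comp_assoc comp_id)
  also have "\<dots> = 0" using \<open>phi m a \<circ> phi m t = 0\<close> by (simp add: fun_eq_iff)
  finally show "phi m a = \<zero>\<^bsub>R0 m\<^esub>" by (simp add: R0_def)
qed

lemma rrof_R0: "right_ring_of_fractions (QGamma1 m) (T1 m) (R0 m) (phi m)"
  unfolding right_ring_of_fractions_def
proof (intro conjI ballI)
  show "ring (R0 m)" by (rule R0_ring)
  show "phi m \<in> ring_hom (QGamma1 m) (R0 m)" by (rule phi_hom)
  fix t assume "t \<in> T1 m" then show "phi m t \<in> Units (R0 m)" by (rule phi_unit)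
next
  fix r assume "r \<in> carrier (R0 m)"
  then have "r \<in> Lin m" by (simp add: R0_def)
  then obtain a t where at: "a \<in> carrier (QGamma1 m)" "t \<in> T1 m" "r = phi m a \<circ> Winv m t"
    using rep by blast
  then have "r = phi m a \<otimes>\<^bsub>R0 m\<^esub> inv\<^bsub>R0 m\<^esub> phi m t" by (subst inv_phi[OF at(2)]) (simp add: R0_def)
  then show "\<exists>a\<in>carrier (QGamma1 m). \<exists>t\<in>T1 m. r = phi m a \<otimes>\<^bsub>R0 m\<^esub> inv\<^bsub>R0 m\<^esub> phi m t"
    using at by blast
next
  fix a assume "a \<in> carrier (QGamma1 m)"
  then show "(phi m a = \<zero>\<^bsub>R0 m\<^esub>) = (\<exists>t\<in>T1 m. a \<otimes>\<^bsub>QGamma1 m\<^esub> t = \<zero>\<^bsub>QGamma1 m\<^esub>)"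
    by (rule kernel)
qed

end

lemma transport:
  assumes rr: "right_ring_of_fractions A T R \<phi>" and inj: "inj_on e (carrier R)"
  shows "right_ring_of_fractions A T (image_ring e R) (e \<circ> \<phi>)"
proof -
  let ?R' = "image_ring e R"
  have R: "ring R" and ph: "\<phi> \<in> ring_hom A R" and U: "\<forall>t\<in>T. \<phi> t \<in> Units R"
    and Rep: "\<forall>r\<in>carrier R. \<exists>a\<in>carrier A. \<exists>t\<in>T. r = \<phi> a \<otimes>\<^bsub>R\<^esub> inv\<^bsub>R\<^esub> (\<phi> t)"
    and Ker: "\<forall>a\<in>carrier A. \<phi> a = \<zero>\<^bsub>R\<^esub> \<longleftrightarrow> (\<exists>t\<in>T. a \<otimes>\<^bsub>A\<^esub> t = \<zero>\<^bsub>A\<^esub>)"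
    using rr unfolding right_ring_of_fractions_def by auto
  have iso: "e \<in> ring_iso R ?R'" by (rule inj_imp_image_ring_iso[OF inj])
  have R': "ring ?R'" by (rule ring.inj_imp_image_ring_is_ring[OF R inj])
  have eh: "e \<in> ring_hom R ?R'" using iso by (simp add: ring_iso_def)
  have car: "carrier ?R' = e ` carrier R" by (simp add: image_ring_def image_group_def monoid.defs)
  have mul: "\<And>x y. x \<in> carrier R \<Longrightarrow> y \<in> carrier R \<Longrightarrow> e (x \<otimes>\<^bsub>R\<^esub> y) = e x \<otimes>\<^bsub>?R'\<^esub> e y"
    using ring_hom_mult[OF eh] by blast
  have one: "e \<one>\<^bsub>R\<^esub> = \<one>\<^bsub>?R'\<^esub>" using ring_hom_one[OF eh] .
  have zero: "e \<zero>\<^bsub>R\<^esub> = \<zero>\<^bsub>?R'\<^esub>" using ring_hom_zero[OF eh R R'] .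
  have MR: "monoid R" using ring.is_monoid[OF R] .
  have MR': "monoid ?R'" using ring.is_monoid[OF R'] .
  have unit: "\<And>x. x \<in> Units R \<Longrightarrow> e x \<in> Units ?R' \<and> inv\<^bsub>?R'\<^esub> (e x) = e (inv\<^bsub>R\<^esub> x)"
  proof -
    fix x assume x: "x \<in> Units R"
    have xc: "x \<in> carrier R" and ic: "inv\<^bsub>R\<^esub> x \<in> carrier R"
      using x monoid.Units_closed[OF MR] monoid.Units_inv_closed[OF MR] by auto
    have e1: "e x \<otimes>\<^bsub>?R'\<^esub> e (inv\<^bsub>R\<^esub> x) = \<one>\<^bsub>?R'\<^esub>"
      using mul[OF xc ic] monoid.Units_r_inv[OF MR x] one by simp
    have e2: "e (inv\<^bsub>R\<^esub> x) \<otimes>\<^bsub>?R'\<^esub> e x = \<one>\<^bsub>?R'\<^esub>"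
      using mul[OF ic xc] monoid.Units_l_inv[OF MR x] one by simp
    have c1: "e x \<in> carrier ?R'" and c2: "e (inv\<^bsub>R\<^esub> x) \<in> carrier ?R'" using xc ic car by auto
    show "e x \<in> Units ?R' \<and> inv\<^bsub>?R'\<^esub> (e x) = e (inv\<^bsub>R\<^esub> x)"
      using e1 e2 c1 c2 monoid.inv_unique'[OF MR' c1 c2 e1 e2] by (auto simp: Units_def)
  qed
  show ?thesis unfolding right_ring_of_fractions_def
  proof (intro conjI ballI)
    show "ring ?R'" by (rule R')
    show "e \<circ> \<phi> \<in> ring_hom A ?R'" by (rule ring_hom_trans[OF ph eh])
    fix t assume "t \<in> T" then show "(e \<circ> \<phi>) t \<in> Units ?R'" using U unit by simp
  next
    fix r assume "r \<in> carrier ?R'"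
    then obtain r0 where r0: "r0 \<in> carrier R" "r = e r0" using car by auto
    obtain a t where at: "a \<in> carrier A" "t \<in> T" "r0 = \<phi> a \<otimes>\<^bsub>R\<^esub> inv\<^bsub>R\<^esub> (\<phi> t)"
      using Rep r0(1) by blast
    have ut: "\<phi> t \<in> Units R" using U at(2) by blast
    have "r = e (\<phi> a) \<otimes>\<^bsub>?R'\<^esub> e (inv\<^bsub>R\<^esub> (\<phi> t))"
      using r0 at mul[OF ring_hom_closed[OF ph at(1)] monoid.Units_inv_closed[OF MR ut]] by simp
    also have "\<dots> = (e \<circ> \<phi>) a \<otimes>\<^bsub>?R'\<^esub> inv\<^bsub>?R'\<^esub> ((e \<circ> \<phi>) t)"
      using unit[OF ut] by simp
    finally show "\<exists>a\<in>carrier A. \<exists>t\<in>T. r = (e \<circ> \<phi>) a \<otimes>\<^bsub>?R'\<^esub> inv\<^bsub>?R'\<^esub> ((e \<circ> \<phi>) t)"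
      using at by blast
  next
    fix a assume a: "a \<in> carrier A"
    have pc: "\<phi> a \<in> carrier R" by (rule ring_hom_closed[OF ph a])
    have zc: "\<zero>\<^bsub>R\<^esub> \<in> carrier R" using ring.ring_simprules(2)[OF R] .
    have "(e \<circ> \<phi>) a = \<zero>\<^bsub>?R'\<^esub> \<longleftrightarrow> \<phi> a = \<zero>\<^bsub>R\<^esub>"
      using inj_onD[OF inj _ pc zc] zero by auto
    then show "((e \<circ> \<phi>) a = \<zero>\<^bsub>?R'\<^esub>) = (\<exists>t\<in>T. a \<otimes>\<^bsub>A\<^esub> t = \<zero>\<^bsub>A\<^esub>)" using Ker a by simp
  qed
qed

definition enc :: "nat \<Rightarrow> Op \<Rightarrow> ((rat poly \<times> int \<Rightarrow> rat) \<times> (rat poly \<times> int \<Rightarrow> rat)) set" where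
  "enc m r = {(a, t). a \<in> carrier (QGamma1 m) \<and> t \<in> T1 m \<and> r = phi m a \<circ> Winv m t}"

lemma enc_inj: "0 < m \<Longrightarrow> inj_on (enc m) (carrier (R0 m))"
proof (rule inj_onI)
  fix r r' assume m: "0 < m" and r: "r \<in> carrier (R0 m)" and "r' \<in> carrier (R0 m)" and e: "enc m r = enc m r'"
  have "r \<in> Lin m" using r by (simp add: R0_def)
  then obtain a t where at: "a \<in> carrier (QGamma1 m)" "t \<in> T1 m" "r = phi m a \<circ> Winv m t"
    using rep[OF m] by blast
  then have "(a, t) \<in> enc m r" by (simp add: enc_def)
  then have "(a, t) \<in> enc m r'" using e by simp
  then show "r = r'" using at by (simp add: enc_def)
qed

theorem existence:
  assumes "0 < m"
  shows "\<exists>(R :: (((rat poly \<times> int \<Rightarrow> rat) \<times> (rat poly \<times> int \<Rightarrow> rat)) set) ring) \<phi>.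
            right_ring_of_fractions (QGamma1 m) (T1 m) R \<phi>"
  using transport[OF rrof_R0[OF assms] enc_inj[OF assms]] by blast

fun Fib2 :: "nat \<Rightarrow> rat \<times> rat" where
  "Fib2 0 = (0, 1)"
| "Fib2 (Suc k) = (3 * fst (Fib2 k) + snd (Fib2 k), - fst (Fib2 k))"

lemma Fib2_mono: "0 \<le> fst (Fib2 k) \<and> fst (Fib2 k) < fst (Fib2 (Suc k))"
  by (induction k) auto

lemma Fib2_pos: "0 < k \<Longrightarrow> 0 < fst (Fib2 k)"
  using Fib2_mono[of "k - 1"] by (cases k) auto

lemma Xpow_mod_q1: "([:0, 1:] ^ k) mod [:1, -3, 1::rat:] = [:snd (Fib2 k), fst (Fib2 k):]"
proof (induction k)
  case 0 then show ?case by (simp add: one_pCons[symmetric] mod_poly_less)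
next
  case (Suc k)
  obtain a b where ab: "Fib2 k = (a, b)" by (cases "Fib2 k")
  have "[:0, 1:] ^ Suc k mod [:1, -3, 1::rat:] = ([:0, 1:] * ([:0, 1:] ^ k mod [:1, -3, 1:])) mod [:1, -3, 1:]"
    unfolding power_Suc by (rule mod_mult_right_eq[symmetric])
  also have "[:0, 1:] * ([:0, 1:] ^ k mod [:1, -3, 1::rat:]) = [:-a, 3 * a + b:] + smult a [:1, -3, 1:]"
    using Suc.IH ab by simp
  also have "([:-a, 3 * a + b:] + smult a [:1, -3, 1::rat:]) mod [:1, -3, 1:] = [:-a, 3 * a + b:] mod [:1, -3, 1:]"
    by (metis mod_mult_self1 mult_smult_left mult_1_left smult_1_left mult.commute)
  also have "\<dots> = [:-a, 3 * a + b:]"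
    by (rule mod_poly_less) simp
  finally show ?case using ab by simp
qed

lemma tpow_one_ne:
  assumes m: "0 < m" and k: "k \<noteq> 0"
  shows "tpow m k 1 \<noteq> 1"
proof
  assume h: "tpow m k 1 = 1"
  have h2: "\<And>k::nat. 0 < k \<Longrightarrow> tpow m (int k) 1 = 1 \<Longrightarrow> False"
  proof -
    fix k :: nat assume k: "0 < k" and e: "tpow m (int k) 1 = 1"
    have "([:0, 1:] ^ k) mod qpoly m = 1 mod qpoly m"
      using e S_one[OF m] by (simp add: tpow_Ek Ek_def S_car_def)
    then have "qpoly m dvd [:0, 1:] ^ k - 1" by (simp add: mod_eq_dvd_iff)
    moreover have "[:1, -3, 1::rat:] dvd qpoly m"
      using m by (simp add: qpoly_def dvd_power)
    ultimately have "[:1, -3, 1::rat:] dvd [:0, 1:] ^ k - 1" by (rule dvd_trans[rotated])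
    then have "([:0, 1:] ^ k) mod [:1, -3, 1::rat:] = 1 mod [:1, -3, 1:]"
      by (simp add: mod_eq_dvd_iff)
    then have "[:snd (Fib2 k), fst (Fib2 k):] = 1"
      by (simp add: Xpow_mod_q1 mod_poly_less)
    then have "fst (Fib2 k) = 0" by (simp add: one_pCons)
    then show False using Fib2_pos[OF k] by simp
  qed
  show False
  proof (cases "0 < k")
    case True then show False using h2[of "nat k"] h by simp
  next
    case False
    have "tpow m (- k) 1 = tpow m (- k) (tpow m k 1)" using h by simp
    also have "\<dots> = 1" using S_one[OF m] by (simp add: tpow_tpow tpow_0_S)
    finally show False using h2[of "nat (- k)"] False k by simp
  qed
qed

context fixes m :: nat assumes m: "0 < m"
begin

lemma A_group: "group (Gamma1 m)" by (rule G_group[OF m])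

lemma conj_formula:
  assumes a: "a \<in> carrier (QGamma1 m)" and s: "s \<in> S_car m"
  shows "(delta (1, 0) \<otimes>\<^bsub>QGamma1 m\<^esub> a \<otimes>\<^bsub>QGamma1 m\<^esub> delta (-1, 0)) (s, n)
       = a (s - 1 + tpow m (- n) 1, n)"
proof -
  have o: "(1::rat poly) \<in> S_car m" "(-1::rat poly) \<in> S_car m" using S_one[OF m] S_uminus[OF m] by auto
  have g: "(1::rat poly, 0::int) \<in> carrier (Gamma1 m)" "(-1::rat poly, 0::int) \<in> carrier (Gamma1 m)"
    using o by (auto simp: G_carrier[OF m])
  have da: "delta (1, 0) \<otimes>\<^bsub>QGamma1 m\<^esub> a \<in> carrier (QGamma1 m)"
    using A_mult_closed[OF m delta_carrierA[OF m o(1)] a] .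
  have x1: "(s + tpow m (- n) 1, n) \<in> carrier (Gamma1 m)"
    using s by (simp add: G_carrier[OF m] S_add[OF m] tpow_in_S)
  have "(delta (1, 0) \<otimes>\<^bsub>QGamma1 m\<^esub> a \<otimes>\<^bsub>QGamma1 m\<^esub> delta (-1, 0)) (s, n)
      = (delta (1, 0) \<otimes>\<^bsub>QGamma1 m\<^esub> a) ((s, n) \<otimes>\<^bsub>Gamma1 m\<^esub> inv\<^bsub>Gamma1 m\<^esub> (-1, 0))"
    using mult_delta_right[OF A_group g(2) da[unfolded QGamma1_def], of "(s, n)"] s
    by (simp add: QGamma1_def G_carrier[OF m])
  also have "(s, n) \<otimes>\<^bsub>Gamma1 m\<^esub> inv\<^bsub>Gamma1 m\<^esub> (-1, 0) = (s + tpow m (- n) 1, n)"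
    using o by (simp add: G_inv[OF m] G_mult[OF m] tpow_0_S tpow_uminus[OF m])
  also have "(delta (1, 0) \<otimes>\<^bsub>QGamma1 m\<^esub> a) (s + tpow m (- n) 1, n)
      = a (inv\<^bsub>Gamma1 m\<^esub> (1, 0) \<otimes>\<^bsub>Gamma1 m\<^esub> (s + tpow m (- n) 1, n))"
    using delta_mult_left[OF A_group g(1) a[unfolded QGamma1_def], of "(s + tpow m (- n) 1, n)"] x1
    by (simp add: QGamma1_def)
  also have "inv\<^bsub>Gamma1 m\<^esub> (1, 0) \<otimes>\<^bsub>Gamma1 m\<^esub> (s + tpow m (- n) 1, n) = (s - 1 + tpow m (- n) 1, n)"
    using o x1 by (simp add: G_inv[OF m] G_mult[OF m] tpow_0_S G_carrier[OF m])
  finally show ?thesis .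
qed

lemma shift_formula:
  assumes a: "a \<in> carrier (QGamma1 m)"
  shows "(a \<otimes>\<^bsub>QGamma1 m\<^esub> delta (0, - k)) (s, n) = (if s \<in> S_car m then a (s, n + k) else 0)"
proof -
  have g: "(0::rat poly, - k) \<in> carrier (Gamma1 m)" using S_zero[OF m] by (simp add: G_carrier[OF m])
  have "(a \<otimes>\<^bsub>QGamma1 m\<^esub> delta (0, - k)) (s, n)
      = (if (s, n) \<in> carrier (Gamma1 m) then a ((s, n) \<otimes>\<^bsub>Gamma1 m\<^esub> inv\<^bsub>Gamma1 m\<^esub> (0, - k)) else 0)"
    using mult_delta_right[OF A_group g a[unfolded QGamma1_def]] by (simp add: QGamma1_def)
  also have "\<dots> = (if s \<in> S_car m then a (s, n + k) else 0)"
    using S_zero[OF m] by (simp add: G_carrier[OF m] G_inv[OF m] G_mult[OF m] tpow_zero)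
  finally show ?thesis .
qed

lemma delta_delta:
  "delta (0::rat poly, - k) \<otimes>\<^bsub>QGamma1 m\<^esub> delta (0::rat poly, k::int) = \<one>\<^bsub>QGamma1 m\<^esub>"
proof
  fix x :: "rat poly \<times> int"
  obtain s :: "rat poly" and n :: int where x: "x = (s, n)" by (cases x)
  have g: "(0::rat poly, k) \<in> carrier (Gamma1 m)" using S_zero[OF m] by (simp add: G_carrier[OF m])
  have d: "delta (0::rat poly, - k) \<in> carrier (QGamma1 m)" using delta_carrierA[OF m S_zero[OF m]] .
  have "(delta (0, - k) \<otimes>\<^bsub>QGamma1 m\<^esub> delta (0, k)) (s, n)
      = (if (s, n) \<in> carrier (Gamma1 m) then delta (0, - k) ((s, n) \<otimes>\<^bsub>Gamma1 m\<^esub> inv\<^bsub>Gamma1 m\<^esub> (0, k)) else 0)"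
    using mult_delta_right[OF A_group g d[unfolded QGamma1_def]] by (simp add: QGamma1_def)
  also have "\<dots> = delta (0::rat poly, 0::int) (s, n)"
    using S_zero[OF m] by (auto simp: G_carrier[OF m] G_inv[OF m] G_mult[OF m] tpow_zero delta_def)
  finally show "(delta (0, - k) \<otimes>\<^bsub>QGamma1 m\<^esub> delta (0, k)) x = \<one>\<^bsub>QGamma1 m\<^esub> x"
    by (simp add: x A_one[OF m])
qed

lemma cancel_T:
  assumes c: "c \<in> carrier (QGamma1 m)" and t: "t \<in> T1 m" and z: "c \<otimes>\<^bsub>QGamma1 m\<^esub> t = \<zero>\<^bsub>QGamma1 m\<^esub>"
  shows "c = (\<lambda>x. 0)"
proof -
  have "phi m c = \<zero>\<^bsub>R0 m\<^esub>" using kernel[OF m c] t z by blast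
  then show ?thesis using phi_inj[OF m c] by (simp add: R0_def)
qed

lemma transl_finite:
  fixes F :: "rat poly set"
  assumes fin: "finite F" and ne: "F \<noteq> {}" and cl: "\<And>s. s \<in> F \<Longrightarrow> s + h \<in> F"
  shows "h = 0"
proof -
  have sub: "(\<lambda>s. s + h) ` F \<subseteq> F" using cl by auto
  have inj: "inj_on (\<lambda>s. s + h) F" by (simp add: inj_on_def)
  have eq: "(\<lambda>s. s + h) ` F = F" using endo_inj_surj[OF fin sub inj] .
  have "sum (\<lambda>s. s) F = sum (\<lambda>s. s) ((\<lambda>s. s + h) ` F)" using eq by simp
  also have "\<dots> = sum (\<lambda>s. s + h) F" using sum.reindex[OF inj, of "\<lambda>s. s"] by simp
  also have "\<dots> = sum (\<lambda>s. s) F + of_nat (card F) * h" by (simp add: sum.distrib)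
  finally have "of_nat (card F) * h = 0" by simp
  moreover have "card F \<noteq> 0" using fin ne by simp
  ultimately show "h = 0" by simp
qed

lemma simplicity:
  assumes rr: "right_ring_of_fractions (QGamma1 m) (T1 m) R \<phi>"
  shows "simple_ring R"
proof -
  let ?A = "QGamma1 m"
  have R: "ring R" and ph: "\<phi> \<in> ring_hom ?A R" and U: "\<And>t. t \<in> T1 m \<Longrightarrow> \<phi> t \<in> Units R"
    and Rep: "\<And>r. r \<in> carrier R \<Longrightarrow> \<exists>a\<in>carrier ?A. \<exists>t\<in>T1 m. r = \<phi> a \<otimes>\<^bsub>R\<^esub> inv\<^bsub>R\<^esub> (\<phi> t)"
    and Ker: "\<And>a. a \<in> carrier ?A \<Longrightarrow> \<phi> a = \<zero>\<^bsub>R\<^esub> \<longleftrightarrow> (\<exists>t\<in>T1 m. a \<otimes>\<^bsub>?A\<^esub> t = \<zero>\<^bsub>?A\<^esub>)"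
    using rr unfolding right_ring_of_fractions_def by auto
  interpret R: ring R by (rule R)
  have phc: "\<And>a. a \<in> carrier ?A \<Longrightarrow> \<phi> a \<in> carrier R" using ring_hom_closed[OF ph] by blast
  have phm: "\<And>a b. a \<in> carrier ?A \<Longrightarrow> b \<in> carrier ?A \<Longrightarrow> \<phi> (a \<otimes>\<^bsub>?A\<^esub> b) = \<phi> a \<otimes>\<^bsub>R\<^esub> \<phi> b"
    using ring_hom_mult[OF ph] by blast
  have pha: "\<And>a b. a \<in> carrier ?A \<Longrightarrow> b \<in> carrier ?A \<Longrightarrow> \<phi> (a \<oplus>\<^bsub>?A\<^esub> b) = \<phi> a \<oplus>\<^bsub>R\<^esub> \<phi> b"
    using ring_hom_add[OF ph] by blast
  have ph1: "\<phi> \<one>\<^bsub>?A\<^esub> = \<one>\<^bsub>R\<^esub>" using ring_hom_one[OF ph] .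
  have oneA: "\<one>\<^bsub>?A\<^esub> \<in> carrier ?A" using QS_carrier[OF m one_QS[OF m]] .
  have zA: "(\<lambda>x. 0) \<in> carrier ?A" by (simp add: A_carrier[OF m] supp_zero)
  have ph0: "\<phi> (\<lambda>x. 0) = \<zero>\<^bsub>R\<^esub>"
    using Ker[OF zA] one_T[OF m] by (auto simp: QGamma1_def zero_GR_mult GR_zero)
  have nz: "\<zero>\<^bsub>R\<^esub> \<noteq> \<one>\<^bsub>R\<^esub>"
  proof
    assume "\<zero>\<^bsub>R\<^esub> = \<one>\<^bsub>R\<^esub>"
    then have "\<phi> \<one>\<^bsub>?A\<^esub> = \<zero>\<^bsub>R\<^esub>" using ph1 by simp
    then obtain t where t: "t \<in> T1 m" "\<one>\<^bsub>?A\<^esub> \<otimes>\<^bsub>?A\<^esub> t = \<zero>\<^bsub>?A\<^esub>" using Ker[OF oneA] by blast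
    have "\<one>\<^bsub>?A\<^esub> \<otimes>\<^bsub>?A\<^esub> t = t"
      using GR_one_mult[OF A_group T_carrier[OF m t(1), unfolded QGamma1_def]] by (simp add: QGamma1_def)
    then have "t = (\<lambda>x. 0)" using t(2) by (simp add: QGamma1_def GR_zero)
    then show False using t(1) by (simp add: T1_eq[OF m])
  qed
  have ideals: "\<And>I. ideal I R \<Longrightarrow> I = {\<zero>\<^bsub>R\<^esub>} \<or> I = carrier R"
  proof -
    fix I assume "ideal I R"
    interpret I: ideal I R by fact
    show "I = {\<zero>\<^bsub>R\<^esub>} \<or> I = carrier R"
    proof (cases "I = {\<zero>\<^bsub>R\<^esub>}")
      case True then show ?thesis by simp
    next
      case False
      then obtain r where r: "r \<in> I" "r \<noteq> \<zero>\<^bsub>R\<^esub>" using I.zero_closed by blast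
      have rc: "r \<in> carrier R" using r I.a_subset by blast
      obtain a t where at: "a \<in> carrier ?A" "t \<in> T1 m" "r = \<phi> a \<otimes>\<^bsub>R\<^esub> inv\<^bsub>R\<^esub> (\<phi> t)"
        using Rep[OF rc] by blast
      have ut: "\<phi> t \<in> Units R" using U[OF at(2)] .
      have pac: "\<phi> a \<in> carrier R" using phc[OF at(1)] .
      have "r \<otimes>\<^bsub>R\<^esub> \<phi> t = \<phi> a"
        using at(3) pac ut by (simp add: R.m_assoc R.Units_closed R.Units_inv_closed)
      then have paI: "\<phi> a \<in> I" using I.I_r_closed[OF r(1) R.Units_closed[OF ut]] by simp
      have pa0: "\<phi> a \<noteq> \<zero>\<^bsub>R\<^esub>"
      proof
        assume "\<phi> a = \<zero>\<^bsub>R\<^esub>"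
        then have "r = \<zero>\<^bsub>R\<^esub>" using at(3) ut by (simp add: R.Units_inv_closed)
        then show False using r(2) by simp
      qed
      define P where "P a \<longleftrightarrow> a \<in> carrier ?A \<and> \<phi> a \<in> I \<and> \<phi> a \<noteq> \<zero>\<^bsub>R\<^esub>" for a
      define \<mu> where "\<mu> a = card (snd ` supp a)" for a :: "rat poly \<times> int \<Rightarrow> rat"
      have "P a" using at(1) paI pa0 by (simp add: P_def)
      then obtain a0 where a0: "P a0" and amin: "\<And>b. P b \<Longrightarrow> \<mu> a0 \<le> \<mu> b"
        using ex_has_least_nat[of P a \<mu>] by blast
      have a0c: "a0 \<in> carrier ?A" and a0I: "\<phi> a0 \<in> I" and a00: "\<phi> a0 \<noteq> \<zero>\<^bsub>R\<^esub>"
        using a0 by (auto simp: P_def)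
      have fin0: "finite (supp a0)" and sub0: "supp a0 \<subseteq> S_car m \<times> UNIV"
        using a0c by (auto simp: A_carrier[OF m])
      have "a0 \<noteq> (\<lambda>x. 0)" using a00 ph0 by auto
      then have "supp a0 \<noteq> {}" using supp_empty_iff by metis
      then obtain g0 where "g0 \<in> supp a0" by blast
      then obtain s0 n0 where sn0: "(s0, n0) \<in> supp a0" by (cases g0) auto
      have s0S: "s0 \<in> S_car m" using sn0 sub0 by auto
      let ?a1 = "a0 \<otimes>\<^bsub>?A\<^esub> delta (0, - n0)"
      have dm: "delta (0::rat poly, - n0) \<in> carrier ?A" and dp: "delta (0::rat poly, n0) \<in> carrier ?A"
        using delta_carrierA[OF m S_zero[OF m]] by auto
      have a1c: "?a1 \<in> carrier ?A" using A_mult_closed[OF m a0c dm] .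
      have a1I: "\<phi> ?a1 \<in> I" using phm[OF a0c dm] I.I_r_closed[OF a0I phc[OF dm]] by simp
      have a10: "\<phi> ?a1 \<noteq> \<zero>\<^bsub>R\<^esub>"
      proof
        assume z: "\<phi> ?a1 = \<zero>\<^bsub>R\<^esub>"
        have "\<phi> ?a1 \<otimes>\<^bsub>R\<^esub> \<phi> (delta (0, n0)) = \<phi> a0 \<otimes>\<^bsub>R\<^esub> (\<phi> (delta (0, - n0)) \<otimes>\<^bsub>R\<^esub> \<phi> (delta (0, n0)))"
          using phm[OF a0c dm] by (simp add: R.m_assoc phc a0c dm dp)
        also have "\<phi> (delta (0, - n0)) \<otimes>\<^bsub>R\<^esub> \<phi> (delta (0, n0)) = \<one>\<^bsub>R\<^esub>"
          using phm[OF dm dp] delta_delta[of n0] ph1 by metis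
        also have "\<phi> a0 \<otimes>\<^bsub>R\<^esub> \<one>\<^bsub>R\<^esub> = \<phi> a0" by (simp add: phc a0c)
        finally have "\<phi> a0 = \<zero>\<^bsub>R\<^esub>" using z by (simp add: phc dp)
        then show False using a00 by simp
      qed
      have a1v: "\<And>s n. ?a1 (s, n) = (if s \<in> S_car m then a0 (s, n + n0) else 0)"
        using shift_formula[OF a0c] by simp
      have a1sub: "supp ?a1 \<subseteq> S_car m \<times> UNIV" using a1c by (auto simp: A_carrier[OF m])
      have fin1: "finite (supp ?a1)" using a1c by (auto simp: A_carrier[OF m])
      have mu1: "\<mu> ?a1 \<le> \<mu> a0"
      proof -
        have "snd ` supp ?a1 \<subseteq> (\<lambda>n. n - n0) ` (snd ` supp a0)"
        proof
          fix n assume "n \<in> snd ` supp ?a1"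
          then obtain s where "(s, n) \<in> supp ?a1" by auto
          then have "a0 (s, n + n0) \<noteq> 0" by (auto simp: supp_def a1v split: if_splits)
          then have "n + n0 \<in> snd ` supp a0" by (force simp: supp_def)
          then show "n \<in> (\<lambda>n. n - n0) ` (snd ` supp a0)" by force
        qed
        then have "card (snd ` supp ?a1) \<le> card ((\<lambda>n. n - n0) ` (snd ` supp a0))"
          using fin0 by (intro card_mono) auto
        also have "\<dots> \<le> card (snd ` supp a0)" by (rule card_image_le) (use fin0 in simp)
        finally show ?thesis by (simp add: \<mu>_def)
      qed
      have zero_in: "0 \<in> snd ` supp ?a1"
      proof -
        have "?a1 (s0, 0) \<noteq> 0" using sn0 s0S by (simp add: a1v supp_def)
        then show ?thesis by (force simp: supp_def)
      qed
      show ?thesis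
      proof (cases "snd ` supp ?a1 \<subseteq> {0}")
        case True
        have "?a1 \<in> QS m" using True a1c a1sub by (force simp: QS_def[OF m])
        moreover have "?a1 \<noteq> (\<lambda>x. 0)" using zero_in supp_zero by force
        ultimately have a1T: "?a1 \<in> T1 m" by (simp add: T1_eq[OF m])
        have u: "\<phi> ?a1 \<in> Units R" using U[OF a1T] .
        have "\<phi> ?a1 \<otimes>\<^bsub>R\<^esub> inv\<^bsub>R\<^esub> (\<phi> ?a1) \<in> I" using I.I_r_closed[OF a1I R.Units_inv_closed[OF u]] .
        then have "\<one>\<^bsub>R\<^esub> \<in> I" using R.Units_r_inv[OF u] by simp
        then show ?thesis using I.one_imp_carrier by blast
      next
        case False
        then obtain n1 where n1: "n1 \<in> snd ` supp ?a1" "n1 \<noteq> 0" by blast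
        let ?b = "delta (1, 0) \<otimes>\<^bsub>?A\<^esub> ?a1 \<otimes>\<^bsub>?A\<^esub> delta (-1, 0)"
        have oS: "(1::rat poly) \<in> S_car m" "(-1::rat poly) \<in> S_car m" using S_one[OF m] S_uminus[OF m] by auto
        have d1: "delta (1::rat poly, 0::int) \<in> carrier ?A" and d2: "delta (-1::rat poly, 0::int) \<in> carrier ?A"
          using delta_carrierA[OF m oS(1)] delta_carrierA[OF m oS(2)] by auto
        have da1: "delta (1, 0) \<otimes>\<^bsub>?A\<^esub> ?a1 \<in> carrier ?A" using A_mult_closed[OF m d1 a1c] .
        have bc: "?b \<in> carrier ?A" using A_mult_closed[OF m da1 d2] .
        have bI: "\<phi> ?b \<in> I"
          using phm[OF da1 d2] phm[OF d1 a1c] I.I_l_closed[OF a1I phc[OF d1]] I.I_r_closed[OF _ phc[OF d2]]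
          by simp
        have bv: "\<And>s n. ?b (s, n) = (if s \<in> S_car m then ?a1 (s - 1 + tpow m (- n) 1, n) else 0)"
        proof -
          fix s n
          show "?b (s, n) = (if s \<in> S_car m then ?a1 (s - 1 + tpow m (- n) 1, n) else 0)"
          proof (cases "s \<in> S_car m")
            case True then show ?thesis using conj_formula[OF a1c True] by simp
          next
            case False
            have "supp ?b \<subseteq> S_car m \<times> UNIV" using bc by (auto simp: A_carrier[OF m])
            then show ?thesis using False by (auto simp: supp_def)
          qed
        qed
        define c where "c = (\<lambda>x. ?b x - ?a1 x)"
        have cc: "c \<in> carrier ?A"
        proof -
          have "supp c \<subseteq> supp ?b \<union> supp ?a1" by (auto simp: c_def supp_def)
          then show ?thesis using bc a1c by (auto simp: A_carrier[OF m] intro: finite_subset)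
        qed
        have bca: "?b = c \<oplus>\<^bsub>?A\<^esub> ?a1" by (simp add: c_def QGamma1_def GR_add)
        have cI: "\<phi> c \<in> I"
        proof -
          have "\<phi> ?b = \<phi> c \<oplus>\<^bsub>R\<^esub> \<phi> ?a1" using bca pha[OF cc a1c] by simp
          then have "\<phi> c = \<phi> ?b \<ominus>\<^bsub>R\<^esub> \<phi> ?a1"
            using phc[OF cc] phc[OF a1c] by (simp add: R.add.m_assoc R.r_neg a_minus_def)
          then show ?thesis using I.a_closed[OF bI I.a_inv_closed[OF a1I]] by (simp add: a_minus_def)
        qed
        have csub: "snd ` supp c \<subseteq> snd ` supp ?a1 - {0}"
        proof
          fix n assume "n \<in> snd ` supp c"
          then obtain s where sn: "(s, n) \<in> supp c" by auto
          then have cv: "c (s, n) \<noteq> 0" by (simp add: supp_def)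
          have sS: "s \<in> S_car m"
          proof (rule ccontr)
            assume "s \<notin> S_car m"
            then have "?a1 (s, n) = 0" using a1sub by (auto simp: supp_def)
            then show False using cv \<open>s \<notin> S_car m\<close> by (simp add: c_def bv)
          qed
          have "n \<noteq> 0"
          proof
            assume "n = 0"
            have "tpow m (- 0) 1 = 1" using tpow_0_S[OF oS(1)] by simp
            then show False using cv sS \<open>n = 0\<close> by (simp add: c_def bv)
          qed
          moreover have "n \<in> snd ` supp ?a1"
          proof (cases "?a1 (s, n) = 0")
            case True
            then have "?a1 (s - 1 + tpow m (- n) 1, n) \<noteq> 0" using cv sS by (simp add: c_def bv)
            then show ?thesis by (force simp: supp_def)
          next
            case False then show ?thesis by (force simp: supp_def)
          qed
          ultimately show "n \<in> snd ` supp ?a1 - {0}" by simp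
        qed
        have mu_c: "\<mu> c < \<mu> a0"
        proof -
          have ps: "snd ` supp c \<subset> snd ` supp ?a1" using csub zero_in by blast
          have "card (snd ` supp c) < card (snd ` supp ?a1)"
            by (rule psubset_card_mono[OF finite_imageI[OF fin1] ps])
          then show ?thesis using mu1 by (simp add: \<mu>_def)
        qed
        have "\<not> P c" using amin mu_c by (meson not_le)
        then have "\<phi> c = \<zero>\<^bsub>R\<^esub>" using cc cI by (simp add: P_def)
        then obtain t where t: "t \<in> T1 m" "c \<otimes>\<^bsub>?A\<^esub> t = \<zero>\<^bsub>?A\<^esub>" using Ker[OF cc] by blast
        have c0: "c = (\<lambda>x. 0)" using cancel_T[OF cc t] .
        have inv: "\<And>s n. s \<in> S_car m \<Longrightarrow> ?a1 (s - 1 + tpow m (- n) 1, n) = ?a1 (s, n)"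
        proof -
          fix s n assume "s \<in> S_car m"
          then show "?a1 (s - 1 + tpow m (- n) 1, n) = ?a1 (s, n)"
            using fun_cong[OF c0, of "(s, n)"] by (simp add: c_def bv)
        qed
        define F where "F = {s. (s, n1) \<in> supp ?a1}"
        have finF: "finite F"
        proof -
          have "F \<subseteq> fst ` supp ?a1" by (force simp: F_def)
          then show ?thesis using finite_imageI[OF fin1, of fst] by (rule finite_subset)
        qed
        have neF: "F \<noteq> {}" using n1(1) by (force simp: F_def)
        have clF: "\<And>s. s \<in> F \<Longrightarrow> s + (tpow m (- n1) 1 - 1) \<in> F"
        proof -
          fix s assume s: "s \<in> F"
          then have sS: "s \<in> S_car m" using a1sub by (auto simp: F_def)
          have e: "s + (tpow m (- n1) 1 - 1) = s - 1 + tpow m (- n1) 1" by simp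
          have "s \<in> {s. (s, n1) \<in> supp ?a1}" using s by (simp add: F_def)
          then show "s + (tpow m (- n1) 1 - 1) \<in> F"
            unfolding F_def mem_Collect_eq e supp_def using inv[OF sS, of n1] by simp
        qed
        have "tpow m (- n1) 1 - 1 = 0" by (rule transl_finite[OF finF neF clF])
        moreover have "tpow m (- n1) 1 \<noteq> 1" using tpow_one_ne[OF m] n1(2) by simp
        ultimately show ?thesis by simp
      qed
    qed
  qed
  show ?thesis unfolding simple_ring_def using R nz ideals by blast
qed

end

theorem proposition4p2:
  fixes m :: nat
  assumes "0 < m"
  shows "(\<exists>(R :: (((rat poly \<times> int \<Rightarrow> rat) \<times> (rat poly \<times> int \<Rightarrow> rat)) set) ring) \<phi>.
            right_ring_of_fractions (QGamma1 m) (T1 m) R \<phi>)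
       \<and> (\<forall>(R :: ('r, 'd) ring_scheme) \<phi>.
            right_ring_of_fractions (QGamma1 m) (T1 m) R \<phi> \<longrightarrow> simple_ring R)"
  using existence[OF assms] simplicity[OF assms] by blast

end
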